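(* Let $\mathcal G$ be a Markov $\alpha$-potential game with $\alpha$-potential function $\Phi$ and stage payoffs $u_i(s,a)\in[0,1]$, and let $(\pi^{(t)})$ be generated by the projected gradient-ascent algorithm with step size $\eta>0$. Then for every $\nu\in\Delta(S)$ and every $t$, $$\Phi(\nu,\pi^{(t+1)})-\Phi(\nu,\pi^{(t)})\ge\frac{1}{2\eta(1-\delta)}\sum_{i\in I}\sum_{s\in S}d_\nu^{\pi_i^{(t+1)},\pi_{-i}^{(t)}}(s)\,\big\|\pi_i^{(t+1)}(s)-\pi_i^{(t)}(s)\big\|_2^2-\frac{4\eta^2\bar A^2|I|^2}{(1-\delta)^5}-|I|^2\alpha.$$
   Context: Markov game $\langle I,S,(A_i),(u_i),P,\delta\rangle$ with finite $I,S,A_i$, $\delta\in(0,1)$; $\bar A=\max_i|A_i|$. Stationary policies $\pi_i$ with $\pi_i(s)\in\Delta(A_i)$, sets $\Pi_i$, $\Pi$, $\Pi_{-i}$; $\pi_{-i}(s,a_{-i})=\prod_{j\ne i}\pi_j(s,a_j)$. $V_i(\mu,\pi)=\mathbb E[\sum_k\delta^k u_i(s^k,a^k)]$ with $s^0\sim\mu$, $a^k\sim\pi(s^k)$, $s^{k+1}\sim P(\cdot|s^k,a^k)$; $V_i(s,\pi)$ for initial state $s$. Markov $\alpha$-potential game: exists $\Phi:S\times\Pi\to\mathbb R$ with $|(\Phi(s,\pi_i',\pi_{-i})-\Phi(s,\pi_i,\pi_{-i}))-(V_i(s,\pi_i',\pi_{-i})-V_i(s,\pi_i,\pi_{-i}))|\le\alpha$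 for all $s,i,\pi_i,\pi_i',\pi_{-i}$; $\Phi(\nu,\pi)=\sum_s\nu(s)\Phi(s,\pi)$. Discounted visitation distribution: $d_\nu^\pi(s)=(1-\delta)\sum_{k\ge0}\delta^k\Pr(s^k=s\mid s^0\sim\nu)$ under $\pi$. Q-function: $Q_i(s,a_i;\pi)=\sum_{a_{-i}}\pi_{-i}(s,a_{-i})\big(u_i(s,a_i,a_{-i})+\delta\sum_{s'}P(s'|s,a)V_i(s',\pi)\big)$, and $Q_i(s;\pi)=(Q_i(s,a_i;\pi))_{a_i\in A_i}$. Projected gradient-ascent algorithm: $\pi_i^{(0)}(s,a_i)=1/|A_i|$, and for $t=0,1,\dots$, for all $i,s$: $\pi_i^{(t+1)}(s)=\mathcal P_{\Delta(A_i)}\big(\pi_i^{(t)}(s)+\eta Q_i(s;\pi^{(t)})\big)$, where $\mathcal P_{\Delta(A_i)}$ is Euclidean projection onto the simplex. *)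

theory Defs
  imports "HOL-Analysis.Analysis"
begin

(* Conventions:
   players: finite type 'i (I = UNIV), states: finite type 's,
   actions: per-player sets A i :: 'a set inside a finite type 'a.
   joint actions: functions a :: 'i => 'a with a i \<in> A i.
   policy profile: pi :: 'i => 's => 'a => real, pi i s = pi_i(s) \<in> \<Delta>(A i).
   transition: P s a s' = P(s'|s,a); payoff: u i s a. *)

definition joint :: "('i \<Rightarrow> 'a set) \<Rightarrow> ('i \<Rightarrow> 'a) set" where
  "joint A = {a. \<forall>i. a i \<in> A i}"

definition prob_simplex :: "'a set \<Rightarrow> ('a \<Rightarrow> real) set" where
  "prob_simplex X = {p. (\<forall>x. 0 \<le> p x) \<and> (\<forall>x. x \<notin> X \<longrightarrow> p x = 0) \<and> sum p X = 1}"

definition valid_policy :: "('i \<Rightarrow> 'a set) \<Rightarrow> 'i \<Rightarrow> ('s \<Rightarrow> 'a \<Rightarrow> real) \<Rightarrow> bool" where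
  "valid_policy A i p \<longleftrightarrow> (\<forall>s. p s \<in> prob_simplex (A i))"

definition valid_profile :: "('i \<Rightarrow> 'a set) \<Rightarrow> ('i \<Rightarrow> 's \<Rightarrow> 'a \<Rightarrow> real) \<Rightarrow> bool" where
  "valid_profile A \<pi> \<longleftrightarrow> (\<forall>i. valid_policy A i (\<pi> i))"

definition joint_prob :: "('i::finite \<Rightarrow> 's \<Rightarrow> 'a \<Rightarrow> real) \<Rightarrow> 's \<Rightarrow> ('i \<Rightarrow> 'a) \<Rightarrow> real" where
  "joint_prob \<pi> s a = (\<Prod>i\<in>UNIV. \<pi> i s (a i))"

fun state_dist :: "('i::finite \<Rightarrow> 'a set) \<Rightarrow> ('s::finite \<Rightarrow> ('i \<Rightarrow> 'a) \<Rightarrow> 's \<Rightarrow> real)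
    \<Rightarrow> ('i \<Rightarrow> 's \<Rightarrow> 'a \<Rightarrow> real) \<Rightarrow> ('s \<Rightarrow> real) \<Rightarrow> nat \<Rightarrow> 's \<Rightarrow> real" where
  "state_dist A P \<pi> \<nu> 0 = \<nu>"
| "state_dist A P \<pi> \<nu> (Suc k) = (\<lambda>s'. \<Sum>s\<in>UNIV. state_dist A P \<pi> \<nu> k s *
      (\<Sum>a\<in>joint A. joint_prob \<pi> s a * P s a s'))"

definition point_dist :: "'s \<Rightarrow> 's \<Rightarrow> real" where
  "point_dist s = (\<lambda>s'. if s' = s then 1 else 0)"

definition value_fn :: "('i::finite \<Rightarrow> 'a set) \<Rightarrow> ('s::finite \<Rightarrow> ('i \<Rightarrow> 'a) \<Rightarrow> 's \<Rightarrow> real)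
    \<Rightarrow> ('i \<Rightarrow> 's \<Rightarrow> ('i \<Rightarrow> 'a) \<Rightarrow> real) \<Rightarrow> real \<Rightarrow> 'i \<Rightarrow> ('s \<Rightarrow> real)
    \<Rightarrow> ('i \<Rightarrow> 's \<Rightarrow> 'a \<Rightarrow> real) \<Rightarrow> real" where
  "value_fn A P u \<delta> i \<nu> \<pi> = (\<Sum>k. \<delta> ^ k * (\<Sum>s\<in>UNIV. state_dist A P \<pi> \<nu> k s *
      (\<Sum>a\<in>joint A. joint_prob \<pi> s a * u i s a)))"

definition visitation :: "('i::finite \<Rightarrow> 'a set) \<Rightarrow> ('s::finite \<Rightarrow> ('i \<Rightarrow> 'a) \<Rightarrow> 's \<Rightarrow> real)
    \<Rightarrow> real \<Rightarrow> ('s \<Rightarrow> real) \<Rightarrow> ('i \<Rightarrow> 's \<Rightarrow> 'a \<Rightarrow> real) \<Rightarrow> 's \<Rightarrow> real" where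
  "visitation A P \<delta> \<nu> \<pi> s = (1 - \<delta>) * (\<Sum>k. \<delta> ^ k * state_dist A P \<pi> \<nu> k s)"

definition Q_fn :: "('i::finite \<Rightarrow> 'a set) \<Rightarrow> ('s::finite \<Rightarrow> ('i \<Rightarrow> 'a) \<Rightarrow> 's \<Rightarrow> real)
    \<Rightarrow> ('i \<Rightarrow> 's \<Rightarrow> ('i \<Rightarrow> 'a) \<Rightarrow> real) \<Rightarrow> real \<Rightarrow> 'i
    \<Rightarrow> ('i \<Rightarrow> 's \<Rightarrow> 'a \<Rightarrow> real) \<Rightarrow> 's \<Rightarrow> 'a \<Rightarrow> real" where
  "Q_fn A P u \<delta> i \<pi> s ai = (\<Sum>a\<in>{a\<in>joint A. a i = ai}.
      (\<Prod>j\<in>UNIV - {i}. \<pi> j s (a j)) *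
      (u i s a + \<delta> * (\<Sum>s'\<in>UNIV. P s a s' * value_fn A P u \<delta> i (point_dist s') \<pi>)))"

definition proj_simplex :: "'a set \<Rightarrow> ('a \<Rightarrow> real) \<Rightarrow> ('a \<Rightarrow> real)" where
  "proj_simplex X y = (THE p. p \<in> prob_simplex X \<and>
      (\<forall>q\<in>prob_simplex X. (\<Sum>x\<in>X. (p x - y x)^2) \<le> (\<Sum>x\<in>X. (q x - y x)^2)))"

fun pga :: "('i::finite \<Rightarrow> 'a set) \<Rightarrow> ('s::finite \<Rightarrow> ('i \<Rightarrow> 'a) \<Rightarrow> 's \<Rightarrow> real)
    \<Rightarrow> ('i \<Rightarrow> 's \<Rightarrow> ('i \<Rightarrow> 'a) \<Rightarrow> real) \<Rightarrow> real \<Rightarrow> real \<Rightarrow> nat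
    \<Rightarrow> ('i \<Rightarrow> 's \<Rightarrow> 'a \<Rightarrow> real)" where
  "pga A P u \<delta> \<eta> 0 = (\<lambda>i s a. if a \<in> A i then 1 / real (card (A i)) else 0)"
| "pga A P u \<delta> \<eta> (Suc t) = (\<lambda>i s. proj_simplex (A i)
      (\<lambda>a. pga A P u \<delta> \<eta> t i s a + \<eta> * Q_fn A P u \<delta> i (pga A P u \<delta> \<eta> t) s a))"

definition is_alpha_potential :: "('i::finite \<Rightarrow> 'a set) \<Rightarrow> ('s::finite \<Rightarrow> ('i \<Rightarrow> 'a) \<Rightarrow> 's \<Rightarrow> real)
    \<Rightarrow> ('i \<Rightarrow> 's \<Rightarrow> ('i \<Rightarrow> 'a) \<Rightarrow> real) \<Rightarrow> real \<Rightarrow> real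
    \<Rightarrow> ('s \<Rightarrow> ('i \<Rightarrow> 's \<Rightarrow> 'a \<Rightarrow> real) \<Rightarrow> real) \<Rightarrow> bool" where
  "is_alpha_potential A P u \<delta> \<alpha> \<Phi> \<longleftrightarrow>
     (\<forall>s i \<pi> \<sigma>. valid_profile A \<pi> \<longrightarrow> valid_policy A i \<sigma> \<longrightarrow>
        \<bar>(\<Phi> s (\<pi>(i := \<sigma>)) - \<Phi> s \<pi>)
          - (value_fn A P u \<delta> i (point_dist s) (\<pi>(i := \<sigma>)) - value_fn A P u \<delta> i (point_dist s) \<pi>)\<bar> \<le> \<alpha>)"

end

theory Submission
  imports Defs
begin


lemma geo_bound:
  fixes f :: "nat \<Rightarrow> real"
  assumes d0: "0 \<le> d" and d1: "d < 1" and b: "\<And>k. \<bar>f k\<bar> \<le> B * d ^ k"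
  shows "summable f" "\<bar>suminf f\<bar> \<le> B / (1 - d)"
proof -
  have sg: "summable (\<lambda>k. B * d ^ k)" using d0 d1 by (intro summable_mult summable_geometric) simp
  show sf: "summable f" by (rule summable_comparison_test'[OF sg]) (use b in auto)
  have e: "(\<Sum>k. B * d ^ k) = B / (1 - d)" using d0 d1 by (simp add: suminf_mult suminf_geometric divide_simps)
  have bb: "\<And>k. - (B * d ^ k) \<le> f k" using b by (metis abs_le_iff minus_le_iff)
  have "suminf f \<le> (\<Sum>k. B * d ^ k)" by (rule suminf_le) (use b sf sg in \<open>auto simp: abs_le_iff\<close>)
  moreover have "(\<Sum>k. - (B * d ^ k)) \<le> suminf f" by (rule suminf_le) (use bb sf sg in \<open>auto intro: summable_minus\<close>)
  moreover have "(\<Sum>k. - (B * d ^ k)) = - (\<Sum>k. B * d ^ k)" using sg by (rule suminf_minus)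
  ultimately show "\<bar>suminf f\<bar> \<le> B / (1 - d)" using e by linarith
qed

lemma finite_joint: "finite (joint (A :: 'i::finite \<Rightarrow> 'a::finite set))"
  by simp

locale mdp =
  fixes A :: "'i::finite \<Rightarrow> 'a::finite set"
    and P :: "'s::finite \<Rightarrow> ('i \<Rightarrow> 'a) \<Rightarrow> 's \<Rightarrow> real"
    and \<delta> :: real
  assumes P_nonneg: "\<And>s a s'. a \<in> joint A \<Longrightarrow> 0 \<le> P s a s'"
    and P_sum: "\<And>s a. a \<in> joint A \<Longrightarrow> (\<Sum>s'\<in>UNIV. P s a s') = 1"
    and \<delta>_pos: "0 < \<delta>" and \<delta>_lt1: "\<delta> < 1"
begin

abbreviation "J \<equiv> joint A"

definition stoch :: "('s \<Rightarrow> ('i \<Rightarrow> 'a) \<Rightarrow> real) \<Rightarrow> bool" where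
  "stoch p \<longleftrightarrow> (\<forall>s a. 0 \<le> p s a) \<and> (\<forall>s. (\<Sum>a\<in>J. p s a) = 1)"

definition isdist :: "('s \<Rightarrow> real) \<Rightarrow> bool" where
  "isdist \<nu> \<longleftrightarrow> (\<forall>s. 0 \<le> \<nu> s) \<and> sum \<nu> UNIV = 1"

definition T :: "('s \<Rightarrow> ('i \<Rightarrow> 'a) \<Rightarrow> real) \<Rightarrow> 's \<Rightarrow> 's \<Rightarrow> real" where
  "T p s s' = (\<Sum>a\<in>J. p s a * P s a s')"

fun sd :: "('s \<Rightarrow> ('i \<Rightarrow> 'a) \<Rightarrow> real) \<Rightarrow> ('s \<Rightarrow> real) \<Rightarrow> nat \<Rightarrow> 's \<Rightarrow> real" where
  "sd p \<nu> 0 = \<nu>"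
| "sd p \<nu> (Suc k) = (\<lambda>s'. \<Sum>s\<in>UNIV. sd p \<nu> k s * T p s s')"

definition rr :: "('s \<Rightarrow> ('i \<Rightarrow> 'a) \<Rightarrow> real) \<Rightarrow> ('s \<Rightarrow> ('i \<Rightarrow> 'a) \<Rightarrow> real) \<Rightarrow> 's \<Rightarrow> real" where
  "rr R p s = (\<Sum>a\<in>J. p s a * R s a)"

definition Val where
  "Val R p \<nu> = (\<Sum>k. \<delta> ^ k * (\<Sum>s\<in>UNIV. sd p \<nu> k s * rr R p s))"

definition Dv where
  "Dv p \<nu> s = (\<Sum>k. \<delta> ^ k * sd p \<nu> k s)"

definition G where
  "G R p s a = R s a + \<delta> * (\<Sum>s'\<in>UNIV. P s a s' * Val R p (point_dist s'))"

lemma T_nonneg: "stoch p \<Longrightarrow> 0 \<le> T p s s'"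
  unfolding T_def stoch_def by (auto intro!: sum_nonneg mult_nonneg_nonneg P_nonneg)

lemma T_sum: "stoch p \<Longrightarrow> (\<Sum>s'\<in>UNIV. T p s s') = 1"
proof -
  assume st: "stoch p"
  have "(\<Sum>s'\<in>UNIV. T p s s') = (\<Sum>a\<in>J. p s a * (\<Sum>s'\<in>UNIV. P s a s'))"
    unfolding T_def by (simp add: sum_distrib_left) (rule sum.swap)
  also have "\<dots> = (\<Sum>a\<in>J. p s a)" by (intro sum.cong) (auto simp: P_sum)
  finally show ?thesis using st by (simp add: stoch_def)
qed

lemma sd_dist: "stoch p \<Longrightarrow> isdist \<nu> \<Longrightarrow> isdist (sd p \<nu> k)"
proof (induction k)
  case 0 then show ?case by simp
next
  case (Suc k)
  then have ih: "isdist (sd p \<nu> k)" by simp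
  have "(\<Sum>s'\<in>UNIV. \<Sum>s\<in>UNIV. sd p \<nu> k s * T p s s') = (\<Sum>s\<in>UNIV. sd p \<nu> k s * (\<Sum>s'\<in>UNIV. T p s s'))"
    by (simp add: sum_distrib_left) (rule sum.swap)
  also have "\<dots> = 1" using ih Suc.prems by (simp add: T_sum isdist_def)
  finally show ?case using ih Suc.prems
    by (auto simp: isdist_def intro!: sum_nonneg mult_nonneg_nonneg T_nonneg)
qed

lemma point_isdist: "isdist (point_dist s)"
  by (simp add: isdist_def point_dist_def)

lemma sd_linear: "sd p \<nu> k s' = (\<Sum>s0\<in>UNIV. \<nu> s0 * sd p (point_dist s0) k s')"
proof (induction k arbitrary: s')
  case 0
  have "(\<Sum>s0\<in>UNIV. \<nu> s0 * point_dist s0 s') = (\<Sum>s0\<in>UNIV. if s0 = s' then \<nu> s0 else 0)"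
    by (intro sum.cong) (auto simp: point_dist_def)
  then show ?case by simp
next
  case (Suc k)
  have "sd p \<nu> (Suc k) s' = (\<Sum>s\<in>UNIV. (\<Sum>s0\<in>UNIV. \<nu> s0 * sd p (point_dist s0) k s) * T p s s')"
    using Suc by simp
  also have "\<dots> = (\<Sum>s0\<in>UNIV. \<nu> s0 * (\<Sum>s\<in>UNIV. sd p (point_dist s0) k s * T p s s'))"
    by (simp add: sum_distrib_left sum_distrib_right mult.assoc) (rule sum.swap)
  finally show ?case by simp
qed

lemma sd_shift: "sd p \<nu> (Suc k) = sd p (sd p \<nu> 1) k"
  by (induction k) (simp_all)

lemma sd_point_Suc: "sd p (point_dist s) (Suc k) s'' = (\<Sum>s'\<in>UNIV. T p s s' * sd p (point_dist s') k s'')"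
proof -
  have "sd p (point_dist s) 1 = (\<lambda>s'. T p s s')"
  proof
    fix s' have "(\<Sum>sa\<in>UNIV. point_dist s sa * T p sa s') = (\<Sum>sa\<in>UNIV. if sa = s then T p sa s' else 0)"
      by (intro sum.cong) (auto simp: point_dist_def)
    then show "sd p (point_dist s) 1 s' = T p s s'" by simp
  qed
  then show ?thesis unfolding sd_shift[of p "point_dist s"] by (simp only: sd_linear[of p "T p s" k s''])
qed

end


lemma abs_sum_wbound:
  fixes w x :: "'b \<Rightarrow> real"
  assumes "finite S" "\<And>s. s \<in> S \<Longrightarrow> 0 \<le> w s" "\<And>s. s \<in> S \<Longrightarrow> \<bar>x s\<bar> \<le> M"
  shows "\<bar>\<Sum>s\<in>S. w s * x s\<bar> \<le> (\<Sum>s\<in>S. w s) * M"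
proof -
  have "\<bar>\<Sum>s\<in>S. w s * x s\<bar> \<le> (\<Sum>s\<in>S. \<bar>w s * x s\<bar>)" by (rule sum_abs)
  also have "\<dots> \<le> (\<Sum>s\<in>S. w s * M)"
    using assms by (intro sum_mono) (auto simp: abs_mult intro!: mult_left_mono)
  finally show ?thesis by (simp add: sum_distrib_right)
qed

lemma abs_sum_dbound:
  fixes d x :: "'b \<Rightarrow> real"
  assumes "finite S" "\<And>s. s \<in> S \<Longrightarrow> \<bar>x s\<bar> \<le> M"
  shows "\<bar>\<Sum>s\<in>S. d s * x s\<bar> \<le> (\<Sum>s\<in>S. \<bar>d s\<bar>) * M"
proof -
  have "\<bar>\<Sum>s\<in>S. d s * x s\<bar> \<le> (\<Sum>s\<in>S. \<bar>d s * x s\<bar>)" by (rule sum_abs)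
  also have "\<dots> \<le> (\<Sum>s\<in>S. \<bar>d s\<bar> * M)"
    using assms by (intro sum_mono) (auto simp: abs_mult intro!: mult_left_mono)
  finally show ?thesis by (simp add: sum_distrib_right)
qed

context mdp begin

lemma R_bounded: fixes R :: "'s \<Rightarrow> ('i \<Rightarrow> 'a) \<Rightarrow> real" shows "\<exists>B. \<forall>s a. a \<in> J \<longrightarrow> \<bar>R s a\<bar> \<le> B"
proof (intro exI allI impI)
  fix s a assume a: "a \<in> J"
  have "\<bar>R s a\<bar> \<le> (\<Sum>a\<in>J. \<bar>R s a\<bar>)" using a by (intro member_le_sum) auto
  also have "\<dots> \<le> (\<Sum>s\<in>UNIV. \<Sum>a\<in>J. \<bar>R s a\<bar>)" by (intro member_le_sum) (auto intro: sum_nonneg)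
  finally show "\<bar>R s a\<bar> \<le> (\<Sum>s\<in>UNIV. \<Sum>a\<in>J. \<bar>R s a\<bar>)" .
qed

lemma rr_bound: "stoch p \<Longrightarrow> (\<And>s a. a \<in> J \<Longrightarrow> \<bar>R s a\<bar> \<le> B) \<Longrightarrow> \<bar>rr R p s\<bar> \<le> B"
  unfolding rr_def using abs_sum_wbound[of J "p s" "R s" B] by (simp add: stoch_def)

lemma sd_term_bound:
  assumes "stoch p" "isdist \<nu>" "\<And>s. \<bar>r s\<bar> \<le> B"
  shows "\<bar>\<Sum>s\<in>UNIV. sd p \<nu> k s * r s\<bar> \<le> B"
  using abs_sum_wbound[of UNIV "sd p \<nu> k" r B] sd_dist[OF assms(1,2), of k] assms(3)
  by (simp add: isdist_def)

lemma sd_le1: "stoch p \<Longrightarrow> isdist \<nu> \<Longrightarrow> \<bar>sd p \<nu> k s\<bar> \<le> 1"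
proof -
  assume a: "stoch p" "isdist \<nu>"
  then have d: "isdist (sd p \<nu> k)" by (rule sd_dist)
  then have "sd p \<nu> k s \<le> sum (sd p \<nu> k) UNIV" by (intro member_le_sum) (auto simp: isdist_def)
  then show ?thesis using d by (simp add: isdist_def)
qed

lemma Val_sum_bound:
  assumes "stoch p" "isdist \<nu>" "\<And>s a. a \<in> J \<Longrightarrow> \<bar>R s a\<bar> \<le> B"
  shows "summable (\<lambda>k. \<delta> ^ k * (\<Sum>s\<in>UNIV. sd p \<nu> k s * rr R p s))"
    "\<bar>Val R p \<nu>\<bar> \<le> B / (1 - \<delta>)"
proof -
  have b: "\<bar>\<delta> ^ k * (\<Sum>s\<in>UNIV. sd p \<nu> k s * rr R p s)\<bar> \<le> B * \<delta> ^ k" for k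
  proof -
    have "\<bar>\<Sum>s\<in>UNIV. sd p \<nu> k s * rr R p s\<bar> \<le> B"
      by (rule sd_term_bound[OF assms(1,2)]) (rule rr_bound[OF assms(1,3)])
    then show ?thesis using \<delta>_pos by (simp add: abs_mult mult.commute mult_left_mono)
  qed
  show "summable (\<lambda>k. \<delta> ^ k * (\<Sum>s\<in>UNIV. sd p \<nu> k s * rr R p s))"
    by (rule geo_bound(1)[OF _ \<delta>_lt1 b]) (use \<delta>_pos in auto)
  show "\<bar>Val R p \<nu>\<bar> \<le> B / (1 - \<delta>)" unfolding Val_def
    by (rule geo_bound(2)[OF _ \<delta>_lt1 b]) (use \<delta>_pos in auto)
qed

lemma Val_summable: "stoch p \<Longrightarrow> isdist \<nu> \<Longrightarrow> summable (\<lambda>k. \<delta> ^ k * (\<Sum>s\<in>UNIV. sd p \<nu> k s * rr R p s))"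
  using R_bounded[of R] Val_sum_bound(1) by blast

lemma Val_linear:
  assumes st: "stoch p"
  shows "Val R p \<nu> = (\<Sum>s0\<in>UNIV. \<nu> s0 * Val R p (point_dist s0))"
proof -
  have "Val R p \<nu> = (\<Sum>k. \<Sum>s0\<in>UNIV. \<nu> s0 * (\<delta> ^ k * (\<Sum>s\<in>UNIV. sd p (point_dist s0) k s * rr R p s)))"
    unfolding Val_def
  proof (rule suminf_cong)
    fix k
    have "(\<Sum>s\<in>UNIV. sd p \<nu> k s * rr R p s) = (\<Sum>s\<in>UNIV. (\<Sum>s0\<in>UNIV. \<nu> s0 * sd p (point_dist s0) k s) * rr R p s)"
      by (intro sum.cong refl) (rule arg_cong[where f="\<lambda>x. x * _"], rule sd_linear)
    also have "\<dots> = (\<Sum>s0\<in>UNIV. \<nu> s0 * (\<Sum>s\<in>UNIV. sd p (point_dist s0) k s * rr R p s))"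
      by (simp add: sum_distrib_left sum_distrib_right mult.assoc) (rule sum.swap)
    finally show "\<delta> ^ k * (\<Sum>s\<in>UNIV. sd p \<nu> k s * rr R p s) = (\<Sum>s0\<in>UNIV. \<nu> s0 * (\<delta> ^ k * (\<Sum>s\<in>UNIV. sd p (point_dist s0) k s * rr R p s)))"
      by (simp add: sum_distrib_left mult.left_commute)
  qed
  also have "\<dots> = (\<Sum>s0\<in>UNIV. \<Sum>k. \<nu> s0 * (\<delta> ^ k * (\<Sum>s\<in>UNIV. sd p (point_dist s0) k s * rr R p s)))"
    by (rule suminf_sum) (intro summable_mult Val_summable[OF st point_isdist])
  also have "\<dots> = (\<Sum>s0\<in>UNIV. \<nu> s0 * Val R p (point_dist s0))"
    unfolding Val_def by (intro sum.cong refl) (simp add: suminf_mult Val_summable[OF st point_isdist])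
  finally show ?thesis .
qed

lemma Bellman:
  assumes st: "stoch p"
  shows "Val R p (point_dist s) = rr R p s + \<delta> * (\<Sum>s'\<in>UNIV. T p s s' * Val R p (point_dist s'))"
proof -
  define f where "f k = \<delta> ^ k * (\<Sum>x\<in>UNIV. sd p (point_dist s) k x * rr R p x)" for k
  have sf: "summable f" unfolding f_def by (rule Val_summable[OF st point_isdist])
  have f0: "f 0 = rr R p s"
  proof -
    have "(\<Sum>x\<in>UNIV. point_dist s x * rr R p x) = (\<Sum>x\<in>UNIV. if x = s then rr R p x else 0)"
      by (intro sum.cong) (auto simp: point_dist_def)
    then show ?thesis by (simp add: f_def)
  qed
  have fS: "f (Suc k) = (\<Sum>s'\<in>UNIV. \<delta> * T p s s' * (\<delta> ^ k * (\<Sum>x\<in>UNIV. sd p (point_dist s') k x * rr R p x)))" for k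
  proof -
    have "(\<Sum>x\<in>UNIV. sd p (point_dist s) (Suc k) x * rr R p x) = (\<Sum>x\<in>UNIV. (\<Sum>s'\<in>UNIV. T p s s' * sd p (point_dist s') k x) * rr R p x)"
      by (intro sum.cong refl) (rule arg_cong[where f="\<lambda>x. x * _"], rule sd_point_Suc)
    also have "\<dots> = (\<Sum>s'\<in>UNIV. T p s s' * (\<Sum>x\<in>UNIV. sd p (point_dist s') k x * rr R p x))"
      by (simp add: sum_distrib_left sum_distrib_right mult.assoc) (rule sum.swap)
    finally show ?thesis unfolding f_def by (simp add: sum_distrib_left mult_ac)
  qed
  have "Val R p (point_dist s) = suminf f" unfolding Val_def f_def ..
  also have "\<dots> = f 0 + (\<Sum>k. f (Suc k))" using suminf_split_head[OF sf] by simp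
  also have "(\<Sum>k. f (Suc k)) = (\<Sum>s'\<in>UNIV. \<Sum>k. \<delta> * T p s s' * (\<delta> ^ k * (\<Sum>x\<in>UNIV. sd p (point_dist s') k x * rr R p x)))"
    unfolding fS by (rule suminf_sum) (intro summable_mult Val_summable[OF st point_isdist])
  also have "\<dots> = (\<Sum>s'\<in>UNIV. \<delta> * T p s s' * Val R p (point_dist s'))"
    unfolding Val_def by (intro sum.cong refl) (simp add: suminf_mult Val_summable[OF st point_isdist])
  finally show ?thesis using f0 by (simp add: sum_distrib_left mult.assoc)
qed

lemma Bellman_G:
  assumes st: "stoch p"
  shows "Val R p (point_dist s) = (\<Sum>a\<in>J. p s a * G R p s a)"
proof -
  have "(\<Sum>a\<in>J. p s a * G R p s a) = rr R p s + \<delta> * (\<Sum>a\<in>J. \<Sum>s'\<in>UNIV. p s a * P s a s' * Val R p (point_dist s'))"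
    unfolding G_def rr_def by (simp add: algebra_simps sum.distrib sum_distrib_left)
  also have "(\<Sum>a\<in>J. \<Sum>s'\<in>UNIV. p s a * P s a s' * Val R p (point_dist s')) = (\<Sum>s'\<in>UNIV. T p s s' * Val R p (point_dist s'))"
    unfolding T_def by (subst sum.swap) (simp add: sum_distrib_right)
  finally show ?thesis using Bellman[OF st, of R s] by linarith
qed

lemma Dv_summable: "stoch q \<Longrightarrow> isdist \<nu> \<Longrightarrow> summable (\<lambda>k. \<delta> ^ k * sd q \<nu> k s)"
  by (rule geo_bound(1)[of \<delta> _ 1]) (use \<delta>_pos \<delta>_lt1 sd_le1 in \<open>auto simp: abs_mult intro: mult_left_le\<close>)

lemma Dv_nonneg: "stoch q \<Longrightarrow> isdist \<nu> \<Longrightarrow> 0 \<le> Dv q \<nu> s"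
  unfolding Dv_def using sd_dist[of q \<nu>] \<delta>_pos
  by (intro suminf_nonneg Dv_summable) (auto simp: isdist_def)

lemma Dv_sum: assumes "stoch q" "isdist \<nu>" shows "(\<Sum>s\<in>UNIV. Dv q \<nu> s) = 1 / (1 - \<delta>)"
proof -
  have "(\<Sum>s\<in>UNIV. Dv q \<nu> s) = (\<Sum>k. \<Sum>s\<in>UNIV. \<delta> ^ k * sd q \<nu> k s)"
    unfolding Dv_def by (rule suminf_sum[symmetric]) (rule Dv_summable[OF assms])
  also have "\<dots> = (\<Sum>k. \<delta> ^ k)"
    using sd_dist[OF assms] by (simp add: sum_distrib_left[symmetric] isdist_def)
  also have "\<dots> = 1 / (1 - \<delta>)" using \<delta>_pos \<delta>_lt1 by (simp add: suminf_geometric)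
  finally show ?thesis .
qed

lemma Val_state:
  assumes st: "stoch q" and nu: "isdist \<nu>"
  shows "Val (\<lambda>s a. h s) q \<nu> = (\<Sum>s\<in>UNIV. Dv q \<nu> s * h s)"
proof -
  have rr: "rr (\<lambda>s a. h s) q s = h s" for s
    using st by (simp add: rr_def stoch_def sum_distrib_right[symmetric])
  have "Val (\<lambda>s a. h s) q \<nu> = (\<Sum>k. \<Sum>s\<in>UNIV. \<delta> ^ k * sd q \<nu> k s * h s)"
    unfolding Val_def rr by (simp add: sum_distrib_left mult.assoc)
  also have "\<dots> = (\<Sum>s\<in>UNIV. \<Sum>k. \<delta> ^ k * sd q \<nu> k s * h s)"
    by (rule suminf_sum) (intro summable_mult2 Dv_summable[OF st nu])
  also have "\<dots> = (\<Sum>s\<in>UNIV. Dv q \<nu> s * h s)"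
    unfolding Dv_def by (intro sum.cong refl suminf_mult2[symmetric] Dv_summable[OF st nu])
  finally show ?thesis .
qed

end

context mdp begin

lemma sum_G:
  assumes st: "stoch p"
  shows "(\<Sum>a\<in>J. q s a * G R p s a) = rr R q s + \<delta> * (\<Sum>s'\<in>UNIV. T q s s' * Val R p (point_dist s'))"
proof -
  have "(\<Sum>a\<in>J. q s a * G R p s a) = rr R q s + \<delta> * (\<Sum>a\<in>J. \<Sum>s'\<in>UNIV. q s a * P s a s' * Val R p (point_dist s'))"
    unfolding G_def rr_def by (simp add: algebra_simps sum.distrib sum_distrib_left)
  also have "(\<Sum>a\<in>J. \<Sum>s'\<in>UNIV. q s a * P s a s' * Val R p (point_dist s')) = (\<Sum>s'\<in>UNIV. T q s s' * Val R p (point_dist s'))"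
    unfolding T_def by (subst sum.swap) (simp add: sum_distrib_right)
  finally show ?thesis .
qed

lemma PDL:
  assumes sp: "stoch p" and sq: "stoch q" and nu: "isdist \<nu>"
  shows "Val R q \<nu> - Val R p \<nu> = (\<Sum>s\<in>UNIV. Dv q \<nu> s * (\<Sum>a\<in>J. (q s a - p s a) * G R p s a))"
proof -
  define W where "W s = Val R p (point_dist s)" for s
  define g where "g s = (\<Sum>a\<in>J. (q s a - p s a) * G R p s a)" for s
  define x where "x k = \<delta> ^ k * (\<Sum>s\<in>UNIV. sd q \<nu> k s * rr R q s)" for k
  define b where "b k = \<delta> ^ k * (\<Sum>s\<in>UNIV. sd q \<nu> k s * W s)" for k
  have g_eq: "g s = rr R q s + \<delta> * (\<Sum>s'\<in>UNIV. T q s s' * W s') - W s" for s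
  proof -
    have "g s = (\<Sum>a\<in>J. q s a * G R p s a) - (\<Sum>a\<in>J. p s a * G R p s a)"
      unfolding g_def by (simp add: left_diff_distrib sum_subtractf)
    then show ?thesis unfolding W_def using sum_G[OF sp, of q s R] Bellman_G[OF sp, of R s] by linarith
  qed
  have step: "\<delta> ^ k * (\<Sum>s\<in>UNIV. sd q \<nu> k s * g s) = x k + (b (Suc k) - b k)" for k
  proof -
    have swp: "(\<Sum>s\<in>UNIV. sd q \<nu> k s * (\<Sum>s'\<in>UNIV. T q s s' * W s')) = (\<Sum>s'\<in>UNIV. sd q \<nu> (Suc k) s' * W s')"
      by (simp add: sum_distrib_left sum_distrib_right mult.assoc) (rule sum.swap)
    have "(\<Sum>s\<in>UNIV. sd q \<nu> k s * g s) = (\<Sum>s\<in>UNIV. sd q \<nu> k s * rr R q s + \<delta> * (sd q \<nu> k s * (\<Sum>s'\<in>UNIV. T q s s' * W s')) - sd q \<nu> k s * W s)"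
      unfolding g_eq by (intro sum.cong refl) (simp only: algebra_simps)
    also have "\<dots> = (\<Sum>s\<in>UNIV. sd q \<nu> k s * rr R q s) + \<delta> * (\<Sum>s\<in>UNIV. sd q \<nu> k s * (\<Sum>s'\<in>UNIV. T q s s' * W s')) - (\<Sum>s\<in>UNIV. sd q \<nu> k s * W s)"
      by (simp only: sum.distrib sum_subtractf sum_distrib_left)
    finally have H: "(\<Sum>s\<in>UNIV. sd q \<nu> k s * g s) = (\<Sum>s\<in>UNIV. sd q \<nu> k s * rr R q s) + \<delta> * (\<Sum>s'\<in>UNIV. sd q \<nu> (Suc k) s' * W s') - (\<Sum>s\<in>UNIV. sd q \<nu> k s * W s)"
      unfolding swp .
    show ?thesis unfolding x_def b_def power_Suc H by (simp add: algebra_simps)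
  qed
  obtain B where B: "\<And>s a. a \<in> J \<Longrightarrow> \<bar>R s a\<bar> \<le> B" using R_bounded[of R] by blast
  have Wb: "\<bar>W s\<bar> \<le> B / (1 - \<delta>)" for s unfolding W_def by (rule Val_sum_bound(2)[OF sp point_isdist B])
  have bb: "\<bar>b k\<bar> \<le> B / (1 - \<delta>) * \<delta> ^ k" for k
  proof -
    have "\<bar>\<Sum>s\<in>UNIV. sd q \<nu> k s * W s\<bar> \<le> B / (1 - \<delta>)" by (rule sd_term_bound[OF sq nu Wb])
    then have h: "\<delta> ^ k * \<bar>\<Sum>s\<in>UNIV. sd q \<nu> k s * W s\<bar> \<le> \<delta> ^ k * (B / (1 - \<delta>))"
      using \<delta>_pos by (intro mult_left_mono) auto
    have "\<bar>b k\<bar> = \<delta> ^ k * \<bar>\<Sum>s\<in>UNIV. sd q \<nu> k s * W s\<bar>" unfolding b_def using \<delta>_pos by (simp add: abs_mult)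
    then show ?thesis using h by (simp add: mult.commute)
  qed
  have "summable b" by (rule geo_bound(1)[OF _ \<delta>_lt1 bb]) (use \<delta>_pos in auto)
  then have "b \<longlonglongrightarrow> 0" by (rule summable_LIMSEQ_zero)
  then have tel: "(\<lambda>k. b (Suc k) - b k) sums (0 - b 0)" by (rule telescope_sums)
  have xs: "x sums Val R q \<nu>" unfolding x_def Val_def by (rule summable_sums[OF Val_summable[OF sq nu]])
  have b0: "b 0 = Val R p \<nu>" unfolding b_def W_def using Val_linear[OF sp, of R \<nu>] by (simp add: mult.commute)
  have "(\<lambda>k. \<delta> ^ k * (\<Sum>s\<in>UNIV. sd q \<nu> k s * g s)) sums (Val R q \<nu> - Val R p \<nu>)"
    unfolding step using sums_add[OF xs tel] b0 by simp
  then have e1: "Val R q \<nu> - Val R p \<nu> = (\<Sum>k. \<Sum>s\<in>UNIV. \<delta> ^ k * sd q \<nu> k s * g s)"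
    by (simp add: sums_iff sum_distrib_left mult.assoc)
  also have "\<dots> = (\<Sum>s\<in>UNIV. \<Sum>k. \<delta> ^ k * sd q \<nu> k s * g s)"
    by (rule suminf_sum) (intro summable_mult2 Dv_summable[OF sq nu])
  also have "\<dots> = (\<Sum>s\<in>UNIV. Dv q \<nu> s * g s)"
    unfolding Dv_def by (intro sum.cong refl) (simp add: suminf_mult2 Dv_summable[OF sq nu])
  finally show ?thesis unfolding g_def .
qed

lemma G_bound:
  assumes sp: "stoch p" and B: "\<And>s a. a \<in> J \<Longrightarrow> \<bar>R s a\<bar> \<le> B" and a: "a \<in> J"
  shows "\<bar>G R p s a\<bar> \<le> B / (1 - \<delta>)"
proof -
  have "\<bar>\<Sum>s'\<in>UNIV. P s a s' * Val R p (point_dist s')\<bar> \<le> (\<Sum>s'\<in>UNIV. P s a s') * (B / (1 - \<delta>))"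
    by (rule abs_sum_wbound) (use a P_nonneg Val_sum_bound(2)[OF sp point_isdist B] in auto)
  then have "\<bar>\<Sum>s'\<in>UNIV. P s a s' * Val R p (point_dist s')\<bar> \<le> B / (1 - \<delta>)" using P_sum[OF a] by simp
  then have "\<delta> * \<bar>\<Sum>s'\<in>UNIV. P s a s' * Val R p (point_dist s')\<bar> \<le> \<delta> * (B / (1 - \<delta>))"
    using \<delta>_pos by (intro mult_left_mono) auto
  moreover have "\<bar>G R p s a\<bar> \<le> \<bar>R s a\<bar> + \<bar>\<delta> * (\<Sum>s'\<in>UNIV. P s a s' * Val R p (point_dist s'))\<bar>"
    unfolding G_def by (rule abs_triangle_ineq)
  moreover have "\<bar>\<delta> * (\<Sum>s'\<in>UNIV. P s a s' * Val R p (point_dist s'))\<bar> = \<delta> * \<bar>\<Sum>s'\<in>UNIV. P s a s' * Val R p (point_dist s')\<bar>"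
    using \<delta>_pos by (simp add: abs_mult)
  ultimately have "\<bar>G R p s a\<bar> \<le> B + \<delta> * (B / (1 - \<delta>))" using B[of a s, OF a] by linarith
  also have "\<dots> = B / (1 - \<delta>)" using \<delta>_lt1 by (simp add: field_simps)
  finally show ?thesis .
qed

lemma Val_diff_bound:
  assumes sp: "stoch p" and sq: "stoch q" and nu: "isdist \<nu>"
    and B: "\<And>s a. a \<in> J \<Longrightarrow> \<bar>R s a\<bar> \<le> B" and B0: "0 \<le> B"
    and c: "\<And>s. (\<Sum>a\<in>J. \<bar>q s a - p s a\<bar>) \<le> c"
  shows "\<bar>Val R q \<nu> - Val R p \<nu>\<bar> \<le> c * B / (1 - \<delta>)^2"
proof -
  have M0: "0 \<le> B / (1 - \<delta>)" using B0 \<delta>_lt1 by simp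
  have inner: "\<bar>\<Sum>a\<in>J. (q s a - p s a) * G R p s a\<bar> \<le> c * (B / (1 - \<delta>))" for s
  proof -
    have "\<bar>\<Sum>a\<in>J. (q s a - p s a) * G R p s a\<bar> \<le> (\<Sum>a\<in>J. \<bar>q s a - p s a\<bar>) * (B / (1 - \<delta>))"
      by (rule abs_sum_dbound) (use G_bound[OF sp B] in auto)
    also have "\<dots> \<le> c * (B / (1 - \<delta>))" by (rule mult_right_mono[OF c M0])
    finally show ?thesis .
  qed
  have "\<bar>Val R q \<nu> - Val R p \<nu>\<bar> \<le> (\<Sum>s\<in>UNIV. Dv q \<nu> s) * (c * (B / (1 - \<delta>)))"
    unfolding PDL[OF sp sq nu] by (rule abs_sum_wbound) (use Dv_nonneg[OF sq nu] inner in auto)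
  also have "\<dots> = c * B / (1 - \<delta>)^2" unfolding Dv_sum[OF sq nu] by (simp add: power2_eq_square)
  finally show ?thesis .
qed

lemma G_diff_bound:
  assumes sp: "stoch p" and sq: "stoch q"
    and B: "\<And>s a. a \<in> J \<Longrightarrow> \<bar>R s a\<bar> \<le> B" and B0: "0 \<le> B"
    and c: "\<And>s. (\<Sum>a\<in>J. \<bar>q s a - p s a\<bar>) \<le> c" and a: "a \<in> J"
  shows "\<bar>G R q s a - G R p s a\<bar> \<le> c * B / (1 - \<delta>)^2"
proof -
  have "G R q s a - G R p s a = \<delta> * (\<Sum>s'\<in>UNIV. P s a s' * (Val R q (point_dist s') - Val R p (point_dist s')))"
    unfolding G_def by (simp add: algebra_simps sum_subtractf)
  moreover have "\<bar>\<Sum>s'\<in>UNIV. P s a s' * (Val R q (point_dist s') - Val R p (point_dist s'))\<bar> \<le> (\<Sum>s'\<in>UNIV. P s a s') * (c * B / (1 - \<delta>)^2)"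
    by (rule abs_sum_wbound) (use a P_nonneg Val_diff_bound[OF sp sq point_isdist B B0 c] in auto)
  ultimately have X: "\<bar>\<Sum>s'\<in>UNIV. P s a s' * (Val R q (point_dist s') - Val R p (point_dist s'))\<bar> \<le> c * B / (1 - \<delta>)^2"
    and e: "G R q s a - G R p s a = \<delta> * (\<Sum>s'\<in>UNIV. P s a s' * (Val R q (point_dist s') - Val R p (point_dist s')))"
    using P_sum[OF a] by auto
  have "\<bar>G R q s a - G R p s a\<bar> = \<delta> * \<bar>\<Sum>s'\<in>UNIV. P s a s' * (Val R q (point_dist s') - Val R p (point_dist s'))\<bar>"
    unfolding e using \<delta>_pos by (simp add: abs_mult)
  also have "\<dots> \<le> \<delta> * (c * B / (1 - \<delta>)^2)" using \<delta>_pos X by (intro mult_left_mono) auto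
  also have "\<dots> \<le> c * B / (1 - \<delta>)^2"
  proof -
    have "0 \<le> c" using c[of s] by (meson order.trans sum_nonneg abs_ge_zero)
    then show ?thesis using \<delta>_lt1 \<delta>_pos B0 by (intro mult_left_le_one_le) auto
  qed
  finally show ?thesis .
qed

end


lemma prod_diff_bound:
  fixes S :: "'i set"
  assumes "finite S"
  shows "\<exists>ch. \<forall>f g :: 'i \<Rightarrow> real. (\<forall>j. 0 \<le> f j \<and> 0 \<le> g j) \<longrightarrow>
     \<bar>(\<Prod>j\<in>S. f j) - (\<Prod>j\<in>S. g j)\<bar> \<le> (\<Sum>k\<in>S. \<bar>f k - g k\<bar> * (\<Prod>j\<in>S-{k}. if ch k j then f j else g j))"
  using assms
proof (induction S rule: finite_induct)
  case empty then show ?case by simp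
next
  case (insert m S)
  from insert.IH obtain ch where ch: "\<And>f g :: 'i \<Rightarrow> real. (\<forall>j. 0 \<le> f j \<and> 0 \<le> g j) \<Longrightarrow>
     \<bar>(\<Prod>j\<in>S. f j) - (\<Prod>j\<in>S. g j)\<bar> \<le> (\<Sum>k\<in>S. \<bar>f k - g k\<bar> * (\<Prod>j\<in>S-{k}. if ch k j then f j else g j))" by blast
  define ch' where "ch' k j = (if k = m then False else (j = m \<or> ch k j))" for k j
  show ?case
  proof (intro exI[of _ ch'] allI impI)
    fix f g :: "'i \<Rightarrow> real" assume nn: "\<forall>j. 0 \<le> f j \<and> 0 \<le> g j"
    have pf: "(\<Prod>j\<in>insert m S. f j) = f m * (\<Prod>j\<in>S. f j)" and pg: "(\<Prod>j\<in>insert m S. g j) = g m * (\<Prod>j\<in>S. g j)"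
      using insert by simp_all
    have "\<bar>(\<Prod>j\<in>insert m S. f j) - (\<Prod>j\<in>insert m S. g j)\<bar>
        = \<bar>f m * ((\<Prod>j\<in>S. f j) - (\<Prod>j\<in>S. g j)) + (f m - g m) * (\<Prod>j\<in>S. g j)\<bar>"
      unfolding pf pg by (simp add: algebra_simps)
    also have "\<dots> \<le> f m * \<bar>(\<Prod>j\<in>S. f j) - (\<Prod>j\<in>S. g j)\<bar> + \<bar>f m - g m\<bar> * (\<Prod>j\<in>S. g j)"
      using nn by (simp add: abs_mult prod_nonneg abs_triangle_ineq[THEN order_trans])
    also have "\<dots> \<le> f m * (\<Sum>k\<in>S. \<bar>f k - g k\<bar> * (\<Prod>j\<in>S-{k}. if ch k j then f j else g j)) + \<bar>f m - g m\<bar> * (\<Prod>j\<in>S. g j)"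
      using ch[OF nn] nn by (intro add_right_mono mult_left_mono) auto
    also have "\<dots> = (\<Sum>k\<in>insert m S. \<bar>f k - g k\<bar> * (\<Prod>j\<in>insert m S-{k}. if ch' k j then f j else g j))"
    proof -
      have t1: "(\<Prod>j\<in>insert m S-{m}. if ch' m j then f j else g j) = (\<Prod>j\<in>S. g j)"
        using insert.hyps by (intro prod.cong) (auto simp: ch'_def)
      have t2: "(\<Prod>j\<in>insert m S-{k}. if ch' k j then f j else g j) = f m * (\<Prod>j\<in>S-{k}. if ch k j then f j else g j)"
        if k: "k \<in> S" for k
      proof -
        have km: "k \<noteq> m" using k insert.hyps by auto
        have "insert m S - {k} = insert m (S - {k})" using km by auto
        then have "(\<Prod>j\<in>insert m S-{k}. if ch' k j then f j else g j) = (if ch' k m then f m else g m) * (\<Prod>j\<in>S-{k}. if ch' k j then f j else g j)"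
          using insert.hyps by simp
        also have "(\<Prod>j\<in>S-{k}. if ch' k j then f j else g j) = (\<Prod>j\<in>S-{k}. if ch k j then f j else g j)"
          using insert.hyps km by (intro prod.cong) (auto simp: ch'_def)
        finally show ?thesis using km by (simp add: ch'_def)
      qed
      have "(\<Sum>k\<in>insert m S. \<bar>f k - g k\<bar> * (\<Prod>j\<in>insert m S-{k}. if ch' k j then f j else g j))
          = \<bar>f m - g m\<bar> * (\<Prod>j\<in>S. g j) + (\<Sum>k\<in>S. \<bar>f k - g k\<bar> * (f m * (\<Prod>j\<in>S-{k}. if ch k j then f j else g j)))"
        using insert.hyps t1 t2 by (simp add: sum.insert)
      then show ?thesis by (simp add: sum_distrib_left mult_ac)
    qed
    finally show "\<bar>(\<Prod>j\<in>insert m S. f j) - (\<Prod>j\<in>insert m S. g j)\<bar> \<le> (\<Sum>k\<in>insert m S. \<bar>f k - g k\<bar> * (\<Prod>j\<in>insert m S-{k}. if ch' k j then f j else g j))" .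
  qed
qed

lemma joint_eq_Pi: "joint A = PiE UNIV A"
  by (auto simp: joint_def PiE_def Pi_def)

lemma sum_prod_joint:
  fixes w :: "'i::finite \<Rightarrow> 'a::finite \<Rightarrow> real"
  shows "(\<Sum>a\<in>joint A. \<Prod>j\<in>UNIV. w j (a j)) = (\<Prod>j\<in>UNIV. \<Sum>b\<in>A j. w j b)"
  unfolding joint_eq_Pi by (rule prod_sum_PiE[symmetric]) auto

lemma valid_sum1: "valid_profile A \<rho> \<Longrightarrow> (\<Sum>b\<in>A j. \<rho> j s b) = 1"
  by (simp add: valid_profile_def valid_policy_def prob_simplex_def)

lemma valid_nonneg: "valid_profile A \<rho> \<Longrightarrow> 0 \<le> \<rho> j s b"
  by (simp add: valid_profile_def valid_policy_def prob_simplex_def)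

lemma joint_prob_upd:
  "joint_prob (\<rho>(i := y)) s a = y s (a i) * (\<Prod>j\<in>UNIV-{i}. \<rho> j s (a j))"
proof -
  have "joint_prob (\<rho>(i := y)) s a = (\<rho>(i := y)) i s (a i) * (\<Prod>j\<in>UNIV-{i}. (\<rho>(i := y)) j s (a j))"
    unfolding joint_prob_def by (rule prod.remove) auto
  also have "(\<Prod>j\<in>UNIV-{i}. (\<rho>(i := y)) j s (a j)) = (\<Prod>j\<in>UNIV-{i}. \<rho> j s (a j))"
    by (intro prod.cong) auto
  finally have "joint_prob (\<rho>(i := y)) s a = (\<rho>(i := y)) i s (a i) * (\<Prod>j\<in>UNIV-{i}. \<rho> j s (a j))" .
  then show ?thesis by (simp only: fun_upd_same)
qed

lemma joint_prob_split:
  "joint_prob \<rho> s a = \<rho> i s (a i) * (\<Prod>j\<in>UNIV-{i}. \<rho> j s (a j))"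
  using joint_prob_upd[of \<rho> i "\<rho> i" s a] by simp

lemma joint_l1:
  fixes \<rho> \<rho>' :: "'i::finite \<Rightarrow> 's \<Rightarrow> 'a::finite \<Rightarrow> real"
  assumes v: "valid_profile A \<rho>" and v': "valid_profile A \<rho>'"
  shows "(\<Sum>a\<in>joint A. \<bar>joint_prob \<rho> s a - joint_prob \<rho>' s a\<bar>) \<le> (\<Sum>k\<in>UNIV. \<Sum>b\<in>A k. \<bar>\<rho> k s b - \<rho>' k s b\<bar>)"
proof -
  obtain ch where ch: "\<And>f g :: 'i \<Rightarrow> real. (\<forall>j. 0 \<le> f j \<and> 0 \<le> g j) \<Longrightarrow>
     \<bar>(\<Prod>j\<in>UNIV. f j) - (\<Prod>j\<in>UNIV. g j)\<bar> \<le> (\<Sum>k\<in>UNIV. \<bar>f k - g k\<bar> * (\<Prod>j\<in>UNIV-{k}. if ch k j then f j else g j))"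
    using prod_diff_bound[of "UNIV :: 'i set"] by auto
  define w where "w k j b = (if j = k then \<bar>\<rho> k s b - \<rho>' k s b\<bar> else if ch k j then \<rho> j s b else \<rho>' j s b)" for k j b
  have pt: "\<bar>joint_prob \<rho> s a - joint_prob \<rho>' s a\<bar> \<le> (\<Sum>k\<in>UNIV. \<Prod>j\<in>UNIV. w k j (a j))" for a
  proof -
    have "\<bar>joint_prob \<rho> s a - joint_prob \<rho>' s a\<bar> \<le> (\<Sum>k\<in>UNIV. \<bar>\<rho> k s (a k) - \<rho>' k s (a k)\<bar> * (\<Prod>j\<in>UNIV-{k}. if ch k j then \<rho> j s (a j) else \<rho>' j s (a j)))"
      unfolding joint_prob_def by (rule ch) (use valid_nonneg[OF v] valid_nonneg[OF v'] in auto)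
    also have "\<dots> = (\<Sum>k\<in>UNIV. \<Prod>j\<in>UNIV. w k j (a j))"
    proof (intro sum.cong refl)
      fix k
      have "(\<Prod>j\<in>UNIV. w k j (a j)) = w k k (a k) * (\<Prod>j\<in>UNIV-{k}. w k j (a j))" by (rule prod.remove) auto
      also have "(\<Prod>j\<in>UNIV-{k}. w k j (a j)) = (\<Prod>j\<in>UNIV-{k}. if ch k j then \<rho> j s (a j) else \<rho>' j s (a j))"
        by (intro prod.cong) (auto simp: w_def)
      finally show "\<bar>\<rho> k s (a k) - \<rho>' k s (a k)\<bar> * (\<Prod>j\<in>UNIV-{k}. if ch k j then \<rho> j s (a j) else \<rho>' j s (a j)) = (\<Prod>j\<in>UNIV. w k j (a j))"
        by (simp add: w_def)
    qed
    finally show ?thesis .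
  qed
  have "(\<Sum>a\<in>joint A. \<bar>joint_prob \<rho> s a - joint_prob \<rho>' s a\<bar>) \<le> (\<Sum>a\<in>joint A. \<Sum>k\<in>UNIV. \<Prod>j\<in>UNIV. w k j (a j))"
    by (intro sum_mono pt)
  also have "\<dots> = (\<Sum>k\<in>UNIV. \<Sum>a\<in>joint A. \<Prod>j\<in>UNIV. w k j (a j))" by (rule sum.swap)
  also have "\<dots> = (\<Sum>k\<in>UNIV. \<Prod>j\<in>UNIV. \<Sum>b\<in>A j. w k j b)" by (simp only: sum_prod_joint)
  also have "\<dots> = (\<Sum>k\<in>UNIV. \<Sum>b\<in>A k. \<bar>\<rho> k s b - \<rho>' k s b\<bar>)"
  proof (intro sum.cong refl)
    fix k
    have "(\<Prod>j\<in>UNIV. \<Sum>b\<in>A j. w k j b) = (\<Sum>b\<in>A k. w k k b) * (\<Prod>j\<in>UNIV-{k}. \<Sum>b\<in>A j. w k j b)"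
      by (rule prod.remove) auto
    also have "(\<Prod>j\<in>UNIV-{k}. \<Sum>b\<in>A j. w k j b) = 1"
    proof (intro prod.neutral ballI)
      fix j assume "j \<in> UNIV - {k}"
      then show "(\<Sum>b\<in>A j. w k j b) = 1"
        by (cases "ch k j") (simp_all add: w_def valid_sum1[OF v] valid_sum1[OF v'])
    qed
    finally show "(\<Prod>j\<in>UNIV. \<Sum>b\<in>A j. w k j b) = (\<Sum>b\<in>A k. \<bar>\<rho> k s b - \<rho>' k s b\<bar>)" by (simp add: w_def)
  qed
  finally show ?thesis .
qed


lemma proj_exists:
  fixes X :: "'a set" and y :: "'a \<Rightarrow> real"
  assumes fin: "finite X" and ne: "X \<noteq> {}"
  shows "\<exists>p. p \<in> prob_simplex X \<and> (\<forall>q\<in>prob_simplex X. (\<Sum>x\<in>X. (y x - p x) * (q x - p x)) \<le> 0)"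
proof -
  define g where "g \<theta> = (\<Sum>x\<in>X. max (y x - \<theta>) 0)" for \<theta>
  define t0 where "t0 = Min (y ` X) - 1"
  define t1 where "t1 = Max (y ` X)"
  have mn: "Min (y ` X) \<le> y x" "y x \<le> Max (y ` X)" if "x \<in> X" for x
    using fin that by auto
  obtain x0 where x0: "x0 \<in> X" using ne by blast
  have t01: "t0 \<le> t1" unfolding t0_def t1_def using mn[OF x0] by linarith
  have gt1: "g t1 \<le> 1" unfolding g_def t1_def
  proof -
    have "(\<Sum>x\<in>X. max (y x - Max (y ` X)) 0) = 0" by (intro sum.neutral) (use mn in auto)
    then show "(\<Sum>x\<in>X. max (y x - Max (y ` X)) 0) \<le> 1" by simp
  qed
  have gt0: "1 \<le> g t0"
  proof -
    have "1 \<le> max (y x0 - t0) 0" unfolding t0_def using mn(1)[OF x0] by simp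
    also have "\<dots> \<le> g t0" unfolding g_def by (rule member_le_sum) (use fin x0 in auto)
    finally show ?thesis .
  qed
  have cont: "continuous_on {t0..t1} g" unfolding g_def by (intro continuous_intros)
  obtain \<theta> where th: "g \<theta> = 1" using IVT2'[of g t1 1 t0, OF gt1 gt0 t01 cont] by blast
  define p where "p x = (if x \<in> X then max (y x - \<theta>) 0 else 0)" for x
  have psum: "sum p X = 1" using th unfolding g_def p_def by simp
  have ps: "p \<in> prob_simplex X" unfolding prob_simplex_def using psum by (auto simp: p_def)
  have le: "y x - p x \<le> \<theta>" if "x \<in> X" for x using that by (auto simp: p_def)
  have eq: "(y x - p x) * p x = \<theta> * p x" if "x \<in> X" for x using that by (auto simp: p_def max_def)
  have "(\<Sum>x\<in>X. (y x - p x) * (q x - p x)) \<le> 0" if q: "q \<in> prob_simplex X" for q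
  proof -
    have q0: "\<And>x. 0 \<le> q x" and q1: "sum q X = 1" using q by (auto simp: prob_simplex_def)
    have "(\<Sum>x\<in>X. (y x - p x) * (q x - p x)) = (\<Sum>x\<in>X. (y x - p x) * q x) - (\<Sum>x\<in>X. (y x - p x) * p x)"
      by (simp add: right_diff_distrib sum_subtractf)
    also have "(\<Sum>x\<in>X. (y x - p x) * p x) = (\<Sum>x\<in>X. \<theta> * p x)" by (rule sum.cong[OF refl eq])
    also have "(\<Sum>x\<in>X. \<theta> * p x) = \<theta>" using psum by (simp add: sum_distrib_left[symmetric])
    also have "(\<Sum>x\<in>X. (y x - p x) * q x) \<le> (\<Sum>x\<in>X. \<theta> * q x)"
      by (intro sum_mono mult_right_mono le q0)
    also have "(\<Sum>x\<in>X. \<theta> * q x) = \<theta>" using q1 by (simp add: sum_distrib_left[symmetric])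
    finally show ?thesis by simp
  qed
  then show ?thesis using ps by blast
qed

lemma proj_simplex_props:
  fixes X :: "'a set" and y :: "'a \<Rightarrow> real"
  assumes fin: "finite X" and ne: "X \<noteq> {}"
  shows "proj_simplex X y \<in> prob_simplex X"
    "\<And>q. q \<in> prob_simplex X \<Longrightarrow> (\<Sum>x\<in>X. (y x - proj_simplex X y x) * (q x - proj_simplex X y x)) \<le> 0"
proof -
  obtain p where ps: "p \<in> prob_simplex X" and vi: "\<And>q. q \<in> prob_simplex X \<Longrightarrow> (\<Sum>x\<in>X. (y x - p x) * (q x - p x)) \<le> 0"
    using proj_exists[OF fin ne, of y] by blast
  have expand: "(\<Sum>x\<in>X. (q x - y x)^2) = (\<Sum>x\<in>X. (q x - p x)^2) - 2 * (\<Sum>x\<in>X. (y x - p x) * (q x - p x)) + (\<Sum>x\<in>X. (p x - y x)^2)" for q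
  proof -
    have pt: "(q x - y x)^2 = (q x - p x)^2 - 2*((y x - p x)*(q x - p x)) + (p x - y x)^2" for x
      by (simp add: power2_eq_square algebra_simps)
    show ?thesis unfolding pt by (simp only: sum.distrib sum_subtractf sum_distrib_left)
  qed
  have minp: "(\<Sum>x\<in>X. (p x - y x)^2) \<le> (\<Sum>x\<in>X. (q x - y x)^2)" if "q \<in> prob_simplex X" for q
  proof -
    have "0 \<le> (\<Sum>x\<in>X. (q x - p x)^2)" by (intro sum_nonneg) auto
    then show ?thesis using expand[of q] vi[OF that] by linarith
  qed
  have uniq: "p' = p" if p': "p' \<in> prob_simplex X" "\<forall>q\<in>prob_simplex X. (\<Sum>x\<in>X. (p' x - y x)^2) \<le> (\<Sum>x\<in>X. (q x - y x)^2)" for p'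
  proof
    fix x
    have a1: "(\<Sum>x\<in>X. (p' x - y x)^2) \<le> (\<Sum>x\<in>X. (p x - y x)^2)" using p'(2) ps by blast
    have "(\<Sum>x\<in>X. (p' x - p x)^2) \<le> 0" using expand[of p'] vi[OF p'(1)] a1 by linarith
    moreover have "0 \<le> (\<Sum>x\<in>X. (p' x - p x)^2)" by (intro sum_nonneg) auto
    ultimately have "(\<Sum>x\<in>X. (p' x - p x)^2) = 0" by linarith
    then have z: "\<forall>x\<in>X. (p' x - p x)^2 = 0" using fin by (simp add: sum_nonneg_eq_0_iff)
    show "p' x = p x"
    proof (cases "x \<in> X")
      case True then show ?thesis using z by auto
    next
      case False then show ?thesis using p'(1) ps by (auto simp: prob_simplex_def)
    qed
  qed
  have ex1: "\<exists>!p. p \<in> prob_simplex X \<and> (\<forall>q\<in>prob_simplex X. (\<Sum>x\<in>X. (p x - y x)^2) \<le> (\<Sum>x\<in>X. (q x - y x)^2))"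
  proof (rule ex1I[of _ p])
    show "p \<in> prob_simplex X \<and> (\<forall>q\<in>prob_simplex X. (\<Sum>x\<in>X. (p x - y x)^2) \<le> (\<Sum>x\<in>X. (q x - y x)^2))"
      using ps minp by blast
  next
    fix p' assume "p' \<in> prob_simplex X \<and> (\<forall>q\<in>prob_simplex X. (\<Sum>x\<in>X. (p' x - y x)^2) \<le> (\<Sum>x\<in>X. (q x - y x)^2))"
    then show "p' = p" using uniq by blast
  qed
  have eqp: "proj_simplex X y = p" unfolding proj_simplex_def
    by (rule the1_equality[OF ex1]) (use ps minp in blast)
  show "proj_simplex X y \<in> prob_simplex X" unfolding eqp by (rule ps)
  show "\<And>q. q \<in> prob_simplex X \<Longrightarrow> (\<Sum>x\<in>X. (y x - proj_simplex X y x) * (q x - proj_simplex X y x)) \<le> 0"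
    unfolding eqp by (rule vi)
qed


lemma joint_mixed:
  fixes \<pi> H :: "'i::finite \<Rightarrow> 's \<Rightarrow> 'a::finite \<Rightarrow> real"
  assumes v: "valid_profile A \<pi>" and vH: "valid_profile A H" and Hi: "H i = \<pi> i"
  shows "(\<Sum>a\<in>joint A. \<bar>(joint_prob (H(i := y)) s a - joint_prob H s a) - (joint_prob (\<pi>(i := y)) s a - joint_prob \<pi> s a)\<bar>)
    \<le> (\<Sum>b\<in>A i. \<bar>y s b - \<pi> i s b\<bar>) * (\<Sum>k\<in>UNIV. \<Sum>b\<in>A k. \<bar>H k s b - \<pi> k s b\<bar>)"
proof -
  define S where "S = (UNIV :: 'i set) - {i}"
  obtain ch where ch: "\<And>f g :: 'i \<Rightarrow> real. (\<forall>j. 0 \<le> f j \<and> 0 \<le> g j) \<Longrightarrow>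
     \<bar>(\<Prod>j\<in>S. f j) - (\<Prod>j\<in>S. g j)\<bar> \<le> (\<Sum>k\<in>S. \<bar>f k - g k\<bar> * (\<Prod>j\<in>S-{k}. if ch k j then f j else g j))"
    using prod_diff_bound[of S] by auto
  define w where "w k j b = (if j = i then \<bar>y s b - \<pi> i s b\<bar> else if j = k then \<bar>H k s b - \<pi> k s b\<bar> else if ch k j then H j s b else \<pi> j s b)" for k j b
  have pt: "\<bar>(joint_prob (H(i := y)) s a - joint_prob H s a) - (joint_prob (\<pi>(i := y)) s a - joint_prob \<pi> s a)\<bar>
      \<le> (\<Sum>k\<in>S. \<Prod>j\<in>UNIV. w k j (a j))" for a
  proof -
    have e: "(joint_prob (H(i := y)) s a - joint_prob H s a) - (joint_prob (\<pi>(i := y)) s a - joint_prob \<pi> s a)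
       = (y s (a i) - \<pi> i s (a i)) * ((\<Prod>j\<in>S. H j s (a j)) - (\<Prod>j\<in>S. \<pi> j s (a j)))"
      unfolding joint_prob_upd joint_prob_split[of H s a i] joint_prob_split[of \<pi> s a i] S_def Hi
      by (simp add: algebra_simps)
    have "\<bar>(\<Prod>j\<in>S. H j s (a j)) - (\<Prod>j\<in>S. \<pi> j s (a j))\<bar> \<le> (\<Sum>k\<in>S. \<bar>H k s (a k) - \<pi> k s (a k)\<bar> * (\<Prod>j\<in>S-{k}. if ch k j then H j s (a j) else \<pi> j s (a j)))"
      by (rule ch) (use valid_nonneg[OF vH] valid_nonneg[OF v] in auto)
    then have "\<bar>(y s (a i) - \<pi> i s (a i)) * ((\<Prod>j\<in>S. H j s (a j)) - (\<Prod>j\<in>S. \<pi> j s (a j)))\<bar>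
       \<le> \<bar>y s (a i) - \<pi> i s (a i)\<bar> * (\<Sum>k\<in>S. \<bar>H k s (a k) - \<pi> k s (a k)\<bar> * (\<Prod>j\<in>S-{k}. if ch k j then H j s (a j) else \<pi> j s (a j)))"
      by (simp add: abs_mult mult_left_mono)
    also have "\<dots> = (\<Sum>k\<in>S. \<Prod>j\<in>UNIV. w k j (a j))"
      unfolding sum_distrib_left
    proof (intro sum.cong refl)
      fix k assume k: "k \<in> S"
      then have ki: "k \<noteq> i" by (simp add: S_def)
      have "(\<Prod>j\<in>UNIV. w k j (a j)) = w k i (a i) * (\<Prod>j\<in>UNIV-{i}. w k j (a j))" by (rule prod.remove) auto
      also have "(\<Prod>j\<in>UNIV-{i}. w k j (a j)) = w k k (a k) * (\<Prod>j\<in>UNIV-{i}-{k}. w k j (a j))"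
        by (rule prod.remove) (use ki in auto)
      also have "(\<Prod>j\<in>UNIV-{i}-{k}. w k j (a j)) = (\<Prod>j\<in>S-{k}. if ch k j then H j s (a j) else \<pi> j s (a j))"
        unfolding S_def by (intro prod.cong refl) (auto simp: w_def)
      finally show "\<bar>y s (a i) - \<pi> i s (a i)\<bar> * (\<bar>H k s (a k) - \<pi> k s (a k)\<bar> * (\<Prod>j\<in>S-{k}. if ch k j then H j s (a j) else \<pi> j s (a j))) = (\<Prod>j\<in>UNIV. w k j (a j))"
        using ki by (simp add: w_def)
    qed
    finally show ?thesis unfolding e .
  qed
  have "(\<Sum>a\<in>joint A. \<bar>(joint_prob (H(i := y)) s a - joint_prob H s a) - (joint_prob (\<pi>(i := y)) s a - joint_prob \<pi> s a)\<bar>)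
      \<le> (\<Sum>a\<in>joint A. \<Sum>k\<in>S. \<Prod>j\<in>UNIV. w k j (a j))" by (intro sum_mono pt)
  also have "\<dots> = (\<Sum>k\<in>S. \<Sum>a\<in>joint A. \<Prod>j\<in>UNIV. w k j (a j))" by (rule sum.swap)
  also have "\<dots> = (\<Sum>k\<in>S. \<Prod>j\<in>UNIV. \<Sum>b\<in>A j. w k j b)" by (simp only: sum_prod_joint)
  also have "\<dots> = (\<Sum>k\<in>S. (\<Sum>b\<in>A i. \<bar>y s b - \<pi> i s b\<bar>) * (\<Sum>b\<in>A k. \<bar>H k s b - \<pi> k s b\<bar>))"
  proof (intro sum.cong refl)
    fix k assume k: "k \<in> S"
    then have ki: "k \<noteq> i" by (simp add: S_def)
    have "(\<Prod>j\<in>UNIV. \<Sum>b\<in>A j. w k j b) = (\<Sum>b\<in>A i. w k i b) * (\<Prod>j\<in>UNIV-{i}. \<Sum>b\<in>A j. w k j b)"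
      by (rule prod.remove) auto
    also have "(\<Prod>j\<in>UNIV-{i}. \<Sum>b\<in>A j. w k j b) = (\<Sum>b\<in>A k. w k k b) * (\<Prod>j\<in>UNIV-{i}-{k}. \<Sum>b\<in>A j. w k j b)"
      by (rule prod.remove) (use ki in auto)
    also have "(\<Prod>j\<in>UNIV-{i}-{k}. \<Sum>b\<in>A j. w k j b) = 1"
    proof (intro prod.neutral ballI)
      fix j assume "j \<in> UNIV - {i} - {k}"
      then show "(\<Sum>b\<in>A j. w k j b) = 1"
        by (cases "ch k j") (auto simp: w_def valid_sum1[OF v] valid_sum1[OF vH])
    qed
    finally show "(\<Prod>j\<in>UNIV. \<Sum>b\<in>A j. w k j b) = (\<Sum>b\<in>A i. \<bar>y s b - \<pi> i s b\<bar>) * (\<Sum>b\<in>A k. \<bar>H k s b - \<pi> k s b\<bar>)"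
      using ki by (simp add: w_def)
  qed
  also have "\<dots> = (\<Sum>b\<in>A i. \<bar>y s b - \<pi> i s b\<bar>) * (\<Sum>k\<in>S. \<Sum>b\<in>A k. \<bar>H k s b - \<pi> k s b\<bar>)"
    by (simp add: sum_distrib_left)
  also have "\<dots> \<le> (\<Sum>b\<in>A i. \<bar>y s b - \<pi> i s b\<bar>) * (\<Sum>k\<in>UNIV. \<Sum>b\<in>A k. \<bar>H k s b - \<pi> k s b\<bar>)"
    unfolding S_def by (intro mult_left_mono sum_mono2) (auto intro: sum_nonneg)
  finally show ?thesis .
qed

lemma l1_upd:
  fixes \<rho> :: "'i::finite \<Rightarrow> 's \<Rightarrow> 'a \<Rightarrow> real"
  shows "(\<Sum>k\<in>UNIV. \<Sum>b\<in>A k. \<bar>(\<rho>(i := y)) k s b - \<rho> k s b\<bar>) = (\<Sum>b\<in>A i. \<bar>y s b - \<rho> i s b\<bar>)"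
proof -
  have "(\<Sum>k\<in>UNIV. \<Sum>b\<in>A k. \<bar>(\<rho>(i := y)) k s b - \<rho> k s b\<bar>) = (\<Sum>b\<in>A i. \<bar>(\<rho>(i := y)) i s b - \<rho> i s b\<bar>)"
    by (subst sum.remove[of UNIV i]) (auto intro!: sum.neutral)
  then show ?thesis by simp
qed

lemma cauchy_l1:
  fixes f :: "'b \<Rightarrow> real"
  assumes "finite X"
  shows "(\<Sum>x\<in>X. \<bar>f x\<bar>)^2 \<le> real (card X) * (\<Sum>x\<in>X. (f x)^2)"
proof -
  have "(\<Sum>x\<in>X. \<bar>f x\<bar>)^2 = (\<Sum>x\<in>X. \<Sum>z\<in>X. \<bar>f x\<bar> * \<bar>f z\<bar>)"
    by (simp add: power2_eq_square sum_product)
  also have "\<dots> \<le> (\<Sum>x\<in>X. \<Sum>z\<in>X. ((f x)^2 + (f z)^2) / 2)"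
  proof (intro sum_mono)
    fix x z
    have "0 \<le> (\<bar>f x\<bar> - \<bar>f z\<bar>)^2" by simp
    then show "\<bar>f x\<bar> * \<bar>f z\<bar> \<le> ((f x)^2 + (f z)^2) / 2" by (simp add: power2_eq_square algebra_simps)
  qed
  also have "\<dots> = real (card X) * (\<Sum>x\<in>X. (f x)^2)"
    by (simp add: sum_divide_distrib[symmetric] sum.distrib sum.swap[of "\<lambda>x z. (f z)^2"] sum_distrib_left[symmetric] algebra_simps)
  finally show ?thesis .
qed


lemma valid_upd: "valid_profile A \<rho> \<Longrightarrow> valid_policy A i y \<Longrightarrow> valid_profile A (\<rho>(i := y))"
  by (auto simp: valid_profile_def)

locale game = mdp A P \<delta> for A :: "'i::finite \<Rightarrow> 'a::finite set" and P :: "'s::finite \<Rightarrow> ('i \<Rightarrow> 'a) \<Rightarrow> 's \<Rightarrow> real" and \<delta> +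
  fixes u :: "'i \<Rightarrow> 's \<Rightarrow> ('i \<Rightarrow> 'a) \<Rightarrow> real" and \<eta> :: real
  assumes A_ne: "\<And>i. A i \<noteq> {}"
    and u_range: "\<And>i s a. a \<in> joint A \<Longrightarrow> 0 \<le> u i s a \<and> u i s a \<le> 1"
    and \<eta>_pos: "0 < \<eta>"
begin

lemma u_bound: "a \<in> J \<Longrightarrow> \<bar>u i s a\<bar> \<le> 1"
  using u_range[of a i s] by auto

lemma stoch_joint: assumes v: "valid_profile A \<rho>" shows "stoch (joint_prob \<rho>)"
proof -
  have "(\<Sum>a\<in>J. joint_prob \<rho> s a) = 1" for s
    unfolding joint_prob_def sum_prod_joint[of "\<lambda>j b. \<rho> j s b"] using valid_sum1[OF v] by simp
  then show ?thesis unfolding stoch_def joint_prob_def using valid_nonneg[OF v] by (auto intro: prod_nonneg)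
qed

lemma sd_eq: "state_dist A P \<rho> \<nu> k = sd (joint_prob \<rho>) \<nu> k"
  by (induction k) (simp_all add: T_def)

lemma val_eq: "value_fn A P u \<delta> i \<nu> \<rho> = Val (u i) (joint_prob \<rho>) \<nu>"
  unfolding value_fn_def Val_def rr_def sd_eq ..

lemma vis_eq: "visitation A P \<delta> \<nu> \<rho> s = (1 - \<delta>) * Dv (joint_prob \<rho>) \<nu> s"
  unfolding visitation_def Dv_def sd_eq ..

lemma Q_eq: "Q_fn A P u \<delta> i \<rho> s x = (\<Sum>a\<in>{a\<in>J. a i = x}. (\<Prod>j\<in>UNIV - {i}. \<rho> j s (a j)) * G (u i) (joint_prob \<rho>) s a)"
  unfolding Q_fn_def G_def val_eq ..

lemma valid_pga: "valid_profile A (pga A P u \<delta> \<eta> t)"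
proof (induction t)
  case 0
  have "(\<lambda>a. if a \<in> A i then 1 / real (card (A i)) else 0) \<in> prob_simplex (A i)" for i
  proof -
    have "card (A i) > 0" using A_ne[of i] by (simp add: card_gt_0_iff)
    then show ?thesis by (auto simp: prob_simplex_def)
  qed
  then show ?case by (simp add: valid_profile_def valid_policy_def)
next
  case (Suc t)
  show ?case unfolding valid_profile_def valid_policy_def
    using proj_simplex_props(1)[OF finite A_ne] by simp
qed

lemma inner_eq:
  assumes v: "valid_profile A \<rho>"
  shows "(\<Sum>x\<in>A i. (y s x - \<rho> i s x) * Q_fn A P u \<delta> i \<rho> s x)
     = (\<Sum>a\<in>J. (joint_prob (\<rho>(i := y)) s a - joint_prob \<rho> s a) * G (u i) (joint_prob \<rho>) s a)"
proof -
  define F where "F a = (y s (a i) - \<rho> i s (a i)) * ((\<Prod>j\<in>UNIV - {i}. \<rho> j s (a j)) * G (u i) (joint_prob \<rho>) s a)" for a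
  have "(\<Sum>x\<in>A i. (y s x - \<rho> i s x) * Q_fn A P u \<delta> i \<rho> s x) = (\<Sum>x\<in>A i. \<Sum>a\<in>{a\<in>J. a i = x}. F a)"
    unfolding Q_eq sum_distrib_left F_def by (intro sum.cong refl) auto
  also have "\<dots> = (\<Sum>a\<in>J. F a)" by (rule sum.group) (auto simp: joint_def)
  also have "\<dots> = (\<Sum>a\<in>J. (joint_prob (\<rho>(i := y)) s a - joint_prob \<rho> s a) * G (u i) (joint_prob \<rho>) s a)"
    unfolding F_def joint_prob_upd joint_prob_split[of \<rho> s _ i] by (intro sum.cong refl) (simp add: algebra_simps)
  finally show ?thesis .
qed

lemma l1_single:
  assumes v: "valid_profile A \<rho>" and vy: "valid_policy A i y"
  shows "(\<Sum>a\<in>J. \<bar>joint_prob (\<rho>(i := y)) s a - joint_prob \<rho> s a\<bar>) \<le> (\<Sum>b\<in>A i. \<bar>y s b - \<rho> i s b\<bar>)"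
  using joint_l1[OF valid_upd[OF v vy] v, of s] l1_upd[where A=A and \<rho>=\<rho> and i=i and y=y and s=s] by simp

lemma step_bound:
  assumes v\<pi>: "valid_profile A \<pi>" and vH: "valid_profile A H" and vy: "valid_policy A i y"
    and Hi: "H i = \<pi> i" and nu: "isdist \<nu>"
    and ly: "\<And>s. (\<Sum>b\<in>A i. \<bar>y s b - \<pi> i s b\<bar>) \<le> e"
    and lH: "\<And>s. (\<Sum>k\<in>UNIV. \<Sum>b\<in>A k. \<bar>H k s b - \<pi> k s b\<bar>) \<le> c"
    and e0: "0 \<le> e" and c0: "0 \<le> c"
  shows "\<bar>(Val (u i) (joint_prob (H(i := y))) \<nu> - Val (u i) (joint_prob H) \<nu>)
          - (Val (u i) (joint_prob (\<pi>(i := y))) \<nu> - Val (u i) (joint_prob \<pi>) \<nu>)\<bar> \<le> 3 * c * e / (1 - \<delta>)^3"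
proof -
  define R where "R = u i"
  define q1 where "q1 = joint_prob (H(i := y))"
  define p1 where "p1 = joint_prob H"
  define q0 where "q0 = joint_prob (\<pi>(i := y))"
  define p0 where "p0 = joint_prob \<pi>"
  have sq1: "stoch q1" unfolding q1_def by (rule stoch_joint[OF valid_upd[OF vH vy]])
  have sp1: "stoch p1" unfolding p1_def by (rule stoch_joint[OF vH])
  have sq0: "stoch q0" unfolding q0_def by (rule stoch_joint[OF valid_upd[OF v\<pi> vy]])
  have sp0: "stoch p0" unfolding p0_def by (rule stoch_joint[OF v\<pi>])
  have RB: "\<And>s a. a \<in> J \<Longrightarrow> \<bar>R s a\<bar> \<le> 1" unfolding R_def by (rule u_bound)
  have d0: "0 < 1 - \<delta>" using \<delta>_lt1 by simp
  have n_q1p1: "(\<Sum>a\<in>J. \<bar>q1 s a - p1 s a\<bar>) \<le> e" for s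
    using l1_single[OF vH vy, of s] ly[of s] Hi unfolding q1_def p1_def by simp
  have n_p1p0: "(\<Sum>a\<in>J. \<bar>p1 s a - p0 s a\<bar>) \<le> c" for s
    using joint_l1[OF vH v\<pi>, of s] lH[of s] unfolding p1_def p0_def by simp
  have n_q1q0: "(\<Sum>a\<in>J. \<bar>q1 s a - q0 s a\<bar>) \<le> c" for s
  proof -
    have "(\<Sum>k\<in>UNIV. \<Sum>b\<in>A k. \<bar>(H(i := y)) k s b - (\<pi>(i := y)) k s b\<bar>) \<le> (\<Sum>k\<in>UNIV. \<Sum>b\<in>A k. \<bar>H k s b - \<pi> k s b\<bar>)"
      by (intro sum_mono) auto
    then show ?thesis using joint_l1[OF valid_upd[OF vH vy] valid_upd[OF v\<pi> vy], of s] lH[of s]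
      unfolding q1_def q0_def by simp
  qed
  have mixed: "(\<Sum>a\<in>J. \<bar>(q1 s a - p1 s a) - (q0 s a - p0 s a)\<bar>) \<le> e * c" for s
  proof -
    have "(\<Sum>a\<in>J. \<bar>(q1 s a - p1 s a) - (q0 s a - p0 s a)\<bar>) \<le> (\<Sum>b\<in>A i. \<bar>y s b - \<pi> i s b\<bar>) * (\<Sum>k\<in>UNIV. \<Sum>b\<in>A k. \<bar>H k s b - \<pi> k s b\<bar>)"
      unfolding q1_def p1_def q0_def p0_def by (rule joint_mixed[OF v\<pi> vH Hi])
    also have "\<dots> \<le> e * c" using ly[of s] lH[of s] e0 by (intro mult_mono) (auto intro: sum_nonneg)
    finally show ?thesis .
  qed
  define h1 where "h1 s = (\<Sum>a\<in>J. (q1 s a - p1 s a) * G R p1 s a)" for s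
  define h0 where "h0 s = (\<Sum>a\<in>J. (q0 s a - p0 s a) * G R p0 s a)" for s
  have pdl1: "Val R q1 \<nu> - Val R p1 \<nu> = (\<Sum>s\<in>UNIV. Dv q1 \<nu> s * h1 s)" unfolding h1_def by (rule PDL[OF sp1 sq1 nu])
  have pdl0: "Val R q0 \<nu> - Val R p0 \<nu> = (\<Sum>s\<in>UNIV. Dv q0 \<nu> s * h0 s)" unfolding h0_def by (rule PDL[OF sp0 sq0 nu])
  have h1b: "\<bar>h1 s\<bar> \<le> e / (1 - \<delta>)" for s
  proof -
    have "\<bar>h1 s\<bar> \<le> (\<Sum>a\<in>J. \<bar>q1 s a - p1 s a\<bar>) * (1 / (1 - \<delta>))"
      unfolding h1_def by (rule abs_sum_dbound) (use G_bound[OF sp1 RB] in auto)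
    also have "\<dots> \<le> e * (1 / (1 - \<delta>))" using n_q1p1[of s] d0 by (intro mult_right_mono) auto
    finally show ?thesis by simp
  qed
  have partA: "\<bar>(\<Sum>s\<in>UNIV. Dv q1 \<nu> s * h1 s) - (\<Sum>s\<in>UNIV. Dv q0 \<nu> s * h1 s)\<bar> \<le> c * (e / (1 - \<delta>)) / (1 - \<delta>)^2"
  proof -
    have "\<bar>Val (\<lambda>s a. h1 s) q1 \<nu> - Val (\<lambda>s a. h1 s) q0 \<nu>\<bar> \<le> c * (e / (1 - \<delta>)) / (1 - \<delta>)^2"
      by (rule Val_diff_bound[OF sq0 sq1 nu]) (use h1b e0 d0 n_q1q0 in auto)
    then show ?thesis unfolding Val_state[OF sq1 nu] Val_state[OF sq0 nu] .
  qed
  have hdiff: "\<bar>h1 s - h0 s\<bar> \<le> 2 * c * e / (1 - \<delta>)^2" for s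
  proof -
    have split: "h1 s - h0 s = (\<Sum>a\<in>J. (q1 s a - p1 s a) * (G R p1 s a - G R p0 s a)) + (\<Sum>a\<in>J. ((q1 s a - p1 s a) - (q0 s a - p0 s a)) * G R p0 s a)"
      unfolding h1_def h0_def by (simp add: algebra_simps sum.distrib sum_subtractf)
    have t1: "\<bar>\<Sum>a\<in>J. (q1 s a - p1 s a) * (G R p1 s a - G R p0 s a)\<bar> \<le> e * (c * 1 / (1 - \<delta>)^2)"
    proof -
      have "\<bar>\<Sum>a\<in>J. (q1 s a - p1 s a) * (G R p1 s a - G R p0 s a)\<bar> \<le> (\<Sum>a\<in>J. \<bar>q1 s a - p1 s a\<bar>) * (c * 1 / (1 - \<delta>)^2)"
        by (rule abs_sum_dbound) (use G_diff_bound[OF sp0 sp1 RB _ n_p1p0] in auto)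
      also have "\<dots> \<le> e * (c * 1 / (1 - \<delta>)^2)" using n_q1p1[of s] c0 by (intro mult_right_mono) auto
      finally show ?thesis .
    qed
    have t2: "\<bar>\<Sum>a\<in>J. ((q1 s a - p1 s a) - (q0 s a - p0 s a)) * G R p0 s a\<bar> \<le> (e * c) * (1 / (1 - \<delta>))"
    proof -
      have "\<bar>\<Sum>a\<in>J. ((q1 s a - p1 s a) - (q0 s a - p0 s a)) * G R p0 s a\<bar> \<le> (\<Sum>a\<in>J. \<bar>(q1 s a - p1 s a) - (q0 s a - p0 s a)\<bar>) * (1 / (1 - \<delta>))"
        by (rule abs_sum_dbound) (use G_bound[OF sp0 RB] in auto)
      also have "\<dots> \<le> (e * c) * (1 / (1 - \<delta>))" using mixed[of s] d0 by (intro mult_right_mono) auto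
      finally show ?thesis .
    qed
    have "(e * c) * (1 / (1 - \<delta>)) \<le> (e * c) * (1 / (1 - \<delta>)^2)"
    proof (intro mult_left_mono)
      have "(1 - \<delta>)^2 \<le> 1 - \<delta>" using d0 \<delta>_lt1 by (simp add: power2_eq_square mult_le_cancel_left1 \<delta>_pos less_imp_le)
      then show "1 / (1 - \<delta>) \<le> 1 / (1 - \<delta>)^2" using d0 by (intro divide_left_mono) auto
    qed (use e0 c0 in auto)
    moreover have "\<bar>h1 s - h0 s\<bar> \<le> \<bar>\<Sum>a\<in>J. (q1 s a - p1 s a) * (G R p1 s a - G R p0 s a)\<bar> + \<bar>\<Sum>a\<in>J. ((q1 s a - p1 s a) - (q0 s a - p0 s a)) * G R p0 s a\<bar>"
      unfolding split by (rule abs_triangle_ineq)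
    ultimately have "\<bar>h1 s - h0 s\<bar> \<le> e * (c * 1 / (1 - \<delta>)^2) + (e * c) * (1 / (1 - \<delta>)^2)" using t1 t2 by linarith
    also have "\<dots> = 2 * c * e / (1 - \<delta>)^2" by (simp add: field_simps)
    finally show ?thesis .
  qed
  have partB: "\<bar>\<Sum>s\<in>UNIV. Dv q0 \<nu> s * (h1 s - h0 s)\<bar> \<le> 2 * c * e / (1 - \<delta>)^3"
  proof -
    have "\<bar>\<Sum>s\<in>UNIV. Dv q0 \<nu> s * (h1 s - h0 s)\<bar> \<le> (\<Sum>s\<in>UNIV. Dv q0 \<nu> s) * (2 * c * e / (1 - \<delta>)^2)"
      by (rule abs_sum_wbound) (use Dv_nonneg[OF sq0 nu] hdiff in auto)
    then show ?thesis unfolding Dv_sum[OF sq0 nu] by (simp add: power3_eq_cube power2_eq_square mult.assoc)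
  qed
  have decomp: "(Val R q1 \<nu> - Val R p1 \<nu>) - (Val R q0 \<nu> - Val R p0 \<nu>)
     = ((\<Sum>s\<in>UNIV. Dv q1 \<nu> s * h1 s) - (\<Sum>s\<in>UNIV. Dv q0 \<nu> s * h1 s)) + (\<Sum>s\<in>UNIV. Dv q0 \<nu> s * (h1 s - h0 s))"
    unfolding pdl1 pdl0 by (simp add: right_diff_distrib sum_subtractf)
  have "\<bar>(Val R q1 \<nu> - Val R p1 \<nu>) - (Val R q0 \<nu> - Val R p0 \<nu>)\<bar> \<le> c * (e / (1 - \<delta>)) / (1 - \<delta>)^2 + 2 * c * e / (1 - \<delta>)^3"
    unfolding decomp using partA partB by linarith
  also have "\<dots> = 3 * c * e / (1 - \<delta>)^3" using d0 by (simp add: field_simps power3_eq_cube power2_eq_square)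
  finally show ?thesis unfolding R_def q1_def p1_def q0_def p0_def .
qed

end


context game begin

lemma main:
  fixes \<alpha> :: real and \<Phi> :: "'s \<Rightarrow> ('i \<Rightarrow> 's \<Rightarrow> 'a \<Rightarrow> real) \<Rightarrow> real" and \<nu> :: "'s \<Rightarrow> real" and t :: nat
  assumes pot: "is_alpha_potential A P u \<delta> \<alpha> \<Phi>"
    and \<nu>_dist: "\<nu> \<in> prob_simplex UNIV"
  shows "(\<Sum>s\<in>UNIV. \<nu> s * \<Phi> s (pga A P u \<delta> \<eta> (Suc t)))
           - (\<Sum>s\<in>UNIV. \<nu> s * \<Phi> s (pga A P u \<delta> \<eta> t))
         \<ge> 1 / (2 * \<eta> * (1 - \<delta>)) *
             (\<Sum>i\<in>UNIV. \<Sum>s\<in>UNIV.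
                visitation A P \<delta> \<nu> ((pga A P u \<delta> \<eta> t)(i := pga A P u \<delta> \<eta> (Suc t) i)) s
                * (\<Sum>a\<in>A i. (pga A P u \<delta> \<eta> (Suc t) i s a - pga A P u \<delta> \<eta> t i s a)^2))
           - 4 * \<eta>^2 * (real (Max ((\<lambda>i. card (A i)) ` UNIV)))^2 * (real CARD('i))^2 / (1 - \<delta>)^5
           - (real CARD('i))^2 * \<alpha>"
proof -
  define \<pi> where "\<pi> = pga A P u \<delta> \<eta> t"
  define \<pi>' where "\<pi>' = pga A P u \<delta> \<eta> (Suc t)"
  define N where "N = CARD('i)"
  define Ab where "Ab = real (Max ((\<lambda>i. card (A i)) ` UNIV))"
  define e where "e = \<eta> * Ab / (1 - \<delta>)"
  define dsq where "dsq i s = (\<Sum>a\<in>A i. (\<pi>' i s a - \<pi> i s a)^2)" for i s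
  define l where "l i s = (\<Sum>b\<in>A i. \<bar>\<pi>' i s b - \<pi> i s b\<bar>)" for i s
  define inner where "inner i s = (\<Sum>a\<in>J. (joint_prob (\<pi>(i := \<pi>' i)) s a - joint_prob \<pi> s a) * G (u i) (joint_prob \<pi>) s a)" for i s
  have d0: "0 < 1 - \<delta>" using \<delta>_lt1 by simp
  have v\<pi>: "valid_profile A \<pi>" unfolding \<pi>_def by (rule valid_pga)
  have v\<pi>': "valid_profile A \<pi>'" unfolding \<pi>'_def by (rule valid_pga)
  have vp': "valid_policy A i (\<pi>' i)" for i using v\<pi>' by (simp add: valid_profile_def)
  have nu: "isdist \<nu>" using \<nu>_dist by (simp add: isdist_def prob_simplex_def)
  have Ab0: "0 \<le> Ab" unfolding Ab_def by simp
  have cardAb: "real (card (A i)) \<le> Ab" for i unfolding Ab_def by simp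
  have e0: "0 \<le> e" unfolding e_def using \<eta>_pos Ab0 d0 by simp
  have N1: "1 \<le> real N" unfolding N_def by simp
  have \<alpha>0: "0 \<le> \<alpha>"
  proof -
    obtain s0 :: 's where True by simp
    obtain i0 :: 'i where True by simp
    have vpi: "valid_policy A i0 (\<pi> i0)" using v\<pi> by (simp add: valid_profile_def)
    show ?thesis using pot[unfolded is_alpha_potential_def, rule_format, OF v\<pi> vpi, of s0] by simp
  qed
  have dsq_le: "dsq i s \<le> \<eta> * inner i s" for i s
  proof -
    have "\<pi>' i s = proj_simplex (A i) (\<lambda>a. \<pi> i s a + \<eta> * Q_fn A P u \<delta> i \<pi> s a)"
      unfolding \<pi>'_def \<pi>_def by simp
    moreover have "\<pi> i s \<in> prob_simplex (A i)" using v\<pi> by (simp add: valid_profile_def valid_policy_def)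
    ultimately have vi: "(\<Sum>x\<in>A i. ((\<pi> i s x + \<eta> * Q_fn A P u \<delta> i \<pi> s x) - \<pi>' i s x) * (\<pi> i s x - \<pi>' i s x)) \<le> 0"
      using proj_simplex_props(2)[OF finite A_ne, of "\<pi> i s" i "\<lambda>a. \<pi> i s a + \<eta> * Q_fn A P u \<delta> i \<pi> s a"] by simp
    have "(\<Sum>x\<in>A i. ((\<pi> i s x + \<eta> * Q_fn A P u \<delta> i \<pi> s x) - \<pi>' i s x) * (\<pi> i s x - \<pi>' i s x))
       = dsq i s - \<eta> * (\<Sum>x\<in>A i. (\<pi>' i s x - \<pi> i s x) * Q_fn A P u \<delta> i \<pi> s x)"
      unfolding dsq_def by (simp add: power2_eq_square algebra_simps sum.distrib sum_subtractf sum_distrib_left)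
    moreover have "\<eta> * (\<Sum>x\<in>A i. (\<pi>' i s x - \<pi> i s x) * Q_fn A P u \<delta> i \<pi> s x) = \<eta> * inner i s"
      unfolding inner_def by (simp only: inner_eq[OF v\<pi>])
    ultimately show ?thesis using vi by linarith
  qed
  have inner_abs: "\<bar>inner i s\<bar> \<le> l i s / (1 - \<delta>)" for i s
  proof -
    have "\<bar>inner i s\<bar> \<le> (\<Sum>a\<in>J. \<bar>joint_prob (\<pi>(i := \<pi>' i)) s a - joint_prob \<pi> s a\<bar>) * (1 / (1 - \<delta>))"
      unfolding inner_def by (rule abs_sum_dbound) (use G_bound[OF stoch_joint[OF v\<pi>] u_bound] in auto)
    also have "\<dots> \<le> l i s * (1 / (1 - \<delta>))" unfolding l_def
      using l1_single[OF v\<pi> vp'[of i], of s] d0 by (intro mult_right_mono) auto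
    finally show ?thesis by simp
  qed
  have l_le: "l i s \<le> e" for i s
  proof -
    have l0: "0 \<le> l i s" unfolding l_def by (auto intro: sum_nonneg)
    have "dsq i s \<le> \<eta> * (l i s / (1 - \<delta>))"
      using dsq_le[of i s] inner_abs[of i s] \<eta>_pos by (smt (verit) abs_le_iff mult_left_mono)
    moreover have "(l i s)^2 \<le> real (card (A i)) * dsq i s" unfolding l_def dsq_def by (rule cauchy_l1) simp
    ultimately have "l i s * l i s \<le> (real (card (A i)) * \<eta> / (1 - \<delta>)) * l i s"
      by (smt (verit) mult_left_mono of_nat_0_le_iff power2_eq_square times_divide_eq_right mult.assoc mult.commute)
    then have "l i s \<le> real (card (A i)) * \<eta> / (1 - \<delta>)"
      using l0 \<eta>_pos d0 by (cases "l i s = 0") (auto intro: mult_right_le_imp_le)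
    also have "\<dots> \<le> e" unfolding e_def using cardAb[of i] \<eta>_pos d0
      by (simp add: divide_right_mono mult.commute mult_left_mono)
    finally show ?thesis .
  qed
  have player: "value_fn A P u \<delta> i \<nu> (H(i := \<pi>' i)) - value_fn A P u \<delta> i \<nu> H
      \<ge> 1 / (\<eta> * (1 - \<delta>)) * (\<Sum>s\<in>UNIV. visitation A P \<delta> \<nu> (\<pi>(i := \<pi>' i)) s * dsq i s) - 3 * (real N * e) * e / (1 - \<delta>)^3"
    if vH: "valid_profile A H" and Hi: "H i = \<pi> i" and Hc: "\<And>k. H k = \<pi> k \<or> H k = \<pi>' k" for i H
  proof -
    have lH: "(\<Sum>k\<in>UNIV. \<Sum>b\<in>A k. \<bar>H k s b - \<pi> k s b\<bar>) \<le> real N * e" for s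
    proof -
      have "(\<Sum>k\<in>UNIV. \<Sum>b\<in>A k. \<bar>H k s b - \<pi> k s b\<bar>) \<le> (\<Sum>k\<in>(UNIV::'i set). e)"
      proof (intro sum_mono)
        fix k :: 'i
        show "(\<Sum>b\<in>A k. \<bar>H k s b - \<pi> k s b\<bar>) \<le> e"
          using Hc[of k] l_le[of k s] e0 unfolding l_def by auto
      qed
      then show ?thesis by (simp add: N_def)
    qed
    have sb: "\<bar>(Val (u i) (joint_prob (H(i := \<pi>' i))) \<nu> - Val (u i) (joint_prob H) \<nu>)
          - (Val (u i) (joint_prob (\<pi>(i := \<pi>' i))) \<nu> - Val (u i) (joint_prob \<pi>) \<nu>)\<bar> \<le> 3 * (real N * e) * e / (1 - \<delta>)^3"
      by (rule step_bound[OF v\<pi> vH vp' Hi nu _ lH e0]) (use l_le e0 in \<open>auto simp: l_def\<close>)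
    have sq0: "stoch (joint_prob (\<pi>(i := \<pi>' i)))" by (rule stoch_joint[OF valid_upd[OF v\<pi> vp']])
    have pdl: "Val (u i) (joint_prob (\<pi>(i := \<pi>' i))) \<nu> - Val (u i) (joint_prob \<pi>) \<nu> = (\<Sum>s\<in>UNIV. Dv (joint_prob (\<pi>(i := \<pi>' i))) \<nu> s * inner i s)"
      unfolding inner_def by (rule PDL[OF stoch_joint[OF v\<pi>] sq0 nu])
    have "(\<Sum>s\<in>UNIV. Dv (joint_prob (\<pi>(i := \<pi>' i))) \<nu> s * inner i s) \<ge> (\<Sum>s\<in>UNIV. Dv (joint_prob (\<pi>(i := \<pi>' i))) \<nu> s * (dsq i s / \<eta>))"
    proof (intro sum_mono mult_left_mono Dv_nonneg[OF sq0 nu])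
      fix s show "dsq i s / \<eta> \<le> inner i s" using dsq_le[of i s] \<eta>_pos by (simp add: divide_le_eq mult.commute)
    qed
    also have "(\<Sum>s\<in>UNIV. Dv (joint_prob (\<pi>(i := \<pi>' i))) \<nu> s * (dsq i s / \<eta>))
        = 1 / (\<eta> * (1 - \<delta>)) * (\<Sum>s\<in>UNIV. visitation A P \<delta> \<nu> (\<pi>(i := \<pi>' i)) s * dsq i s)"
      unfolding vis_eq sum_distrib_left using d0 \<eta>_pos by (intro sum.cong refl) (simp add: field_simps)
    finally show ?thesis unfolding val_eq using sb pdl by linarith
  qed
  obtain f where f: "bij_betw f {..<N} (UNIV :: 'i set)"
    using ex_bij_betw_nat_finite[of "UNIV :: 'i set"] unfolding N_def atLeast0LessThan by auto
  define H where "H m = (\<lambda>j. if j \<in> f ` {..<m} then \<pi>' j else \<pi> j)" for m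
  have H0: "H 0 = \<pi>" unfolding H_def by simp
  have HN: "H N = \<pi>'" unfolding H_def using bij_betw_imp_surj_on[OF f] by simp
  have Hsuc: "H (Suc m) = (H m)(f m := \<pi>' (f m))" for m unfolding H_def by (auto simp: lessThan_Suc)
  have Hfm: "H m (f m) = \<pi> (f m)" if "m < N" for m
  proof -
    have "f m \<notin> f ` {..<m}" using bij_betw_imp_inj_on[OF f] that
      by (auto simp: inj_on_def) (metis lessThan_iff less_irrefl order.strict_trans)
    then show ?thesis unfolding H_def by simp
  qed
  have Hc: "H m k = \<pi> k \<or> H m k = \<pi>' k" for m k unfolding H_def by auto
  have vH: "valid_profile A (H m)" for m using v\<pi> v\<pi>' Hc[of m] by (simp add: valid_profile_def) metis
  define \<Phi>\<nu> where "\<Phi>\<nu> \<rho> = (\<Sum>s\<in>UNIV. \<nu> s * \<Phi> s \<rho>)" for \<rho>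
  define X where "X i = 1 / (\<eta> * (1 - \<delta>)) * (\<Sum>s\<in>UNIV. visitation A P \<delta> \<nu> (\<pi>(i := \<pi>' i)) s * dsq i s) - 3 * (real N * e) * e / (1 - \<delta>)^3 - \<alpha>" for i
  have stepm: "\<Phi>\<nu> (H (Suc m)) - \<Phi>\<nu> (H m) \<ge> X (f m)" if m: "m < N" for m
  proof -
    define i where "i = f m"
    have Hs: "H (Suc m) = (H m)(i := \<pi>' i)" unfolding i_def by (rule Hsuc)
    have ph: "(\<Phi> s ((H m)(i := \<pi>' i)) - \<Phi> s (H m)) \<ge> (value_fn A P u \<delta> i (point_dist s) ((H m)(i := \<pi>' i)) - value_fn A P u \<delta> i (point_dist s) (H m)) - \<alpha>" for s
      using pot[unfolded is_alpha_potential_def, THEN spec[of _ s], THEN spec[of _ i], THEN spec[of _ "H m"], THEN spec[of _ "\<pi>' i"], THEN mp, THEN mp, OF vH[of m] vp'[of i]] by linarith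
    have "\<Phi>\<nu> (H (Suc m)) - \<Phi>\<nu> (H m) = (\<Sum>s\<in>UNIV. \<nu> s * (\<Phi> s ((H m)(i := \<pi>' i)) - \<Phi> s (H m)))"
      unfolding \<Phi>\<nu>_def Hs by (simp add: right_diff_distrib sum_subtractf)
    also have "\<dots> \<ge> (\<Sum>s\<in>UNIV. \<nu> s * ((value_fn A P u \<delta> i (point_dist s) ((H m)(i := \<pi>' i)) - value_fn A P u \<delta> i (point_dist s) (H m)) - \<alpha>))"
      using nu ph by (intro sum_mono mult_left_mono) (auto simp: isdist_def)
    also have "(\<Sum>s\<in>UNIV. \<nu> s * ((value_fn A P u \<delta> i (point_dist s) ((H m)(i := \<pi>' i)) - value_fn A P u \<delta> i (point_dist s) (H m)) - \<alpha>))
       = value_fn A P u \<delta> i \<nu> ((H m)(i := \<pi>' i)) - value_fn A P u \<delta> i \<nu> (H m) - \<alpha>"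
    proof -
      have s1: "sum \<nu> UNIV = 1" using nu by (simp add: isdist_def)
      show ?thesis unfolding val_eq
        Val_linear[OF stoch_joint[OF valid_upd[OF vH[of m] vp'[of i]]], of "u i" \<nu>] Val_linear[OF stoch_joint[OF vH[of m]], of "u i" \<nu>]
        by (simp add: right_diff_distrib sum_subtractf sum_distrib_right[symmetric] s1)
    qed
    also have "\<dots> \<ge> X i" unfolding X_def using player[OF vH Hfm[OF m, folded i_def] Hc] by linarith
    finally show ?thesis unfolding i_def .
  qed
  have "\<Phi>\<nu> \<pi>' - \<Phi>\<nu> \<pi> = (\<Sum>m<N. \<Phi>\<nu> (H (Suc m)) - \<Phi>\<nu> (H m))"
    using sum_lessThan_telescope[of "\<lambda>m. \<Phi>\<nu> (H m)" N] H0 HN by simp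
  also have "\<dots> \<ge> (\<Sum>m<N. X (f m))" by (intro sum_mono stepm) simp
  also have "(\<Sum>m<N. X (f m)) = (\<Sum>i\<in>UNIV. X i)" by (rule sum.reindex_bij_betw[OF f])
  finally have tot: "\<Phi>\<nu> \<pi>' - \<Phi>\<nu> \<pi> \<ge> (\<Sum>i\<in>UNIV. X i)" .
  define S where "S = (\<Sum>i\<in>UNIV. \<Sum>s\<in>UNIV. visitation A P \<delta> \<nu> (\<pi>(i := \<pi>' i)) s * dsq i s)"
  have S0: "0 \<le> S" unfolding S_def
  proof (intro sum_nonneg mult_nonneg_nonneg)
    fix i s show "0 \<le> visitation A P \<delta> \<nu> (\<pi>(i := \<pi>' i)) s"
      unfolding vis_eq using d0 Dv_nonneg[OF stoch_joint[OF valid_upd[OF v\<pi> vp']] nu] by simp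
    show "0 \<le> dsq i s" unfolding dsq_def by (auto intro: sum_nonneg)
  qed
  have sumX: "(\<Sum>i\<in>UNIV. X i) = 1 / (\<eta> * (1 - \<delta>)) * S - real N * (3 * (real N * e) * e / (1 - \<delta>)^3) - real N * \<alpha>"
    unfolding X_def S_def by (simp add: sum_subtractf sum_distrib_left N_def)
  have c1: "1 / (2 * \<eta> * (1 - \<delta>)) * S \<le> 1 / (\<eta> * (1 - \<delta>)) * S"
    using S0 \<eta>_pos d0 by (intro mult_right_mono) (auto simp: field_simps)
  have c2: "real N * (3 * (real N * e) * e / (1 - \<delta>)^3) \<le> 4 * \<eta>^2 * Ab^2 * (real N)^2 / (1 - \<delta>)^5"
  proof -
    have gen: "real N * (3 * (real N * (\<eta> * Ab / d)) * (\<eta> * Ab / d) / d^3) = 3 * (\<eta>^2 * Ab^2 * (real N)^2) / d^5"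
      if "0 < d" for d :: real
    proof -
      have "d^5 = d^2 * d^3" by (simp add: power_add[symmetric])
      then show ?thesis using that by (simp add: field_simps power2_eq_square)
    qed
    have "real N * (3 * (real N * e) * e / (1 - \<delta>)^3) = 3 * (\<eta>^2 * Ab^2 * (real N)^2) / (1 - \<delta>)^5"
      unfolding e_def by (rule gen[OF d0])
    also have "\<dots> \<le> 4 * (\<eta>^2 * Ab^2 * (real N)^2) / (1 - \<delta>)^5"
      using d0 by (intro divide_right_mono mult_right_mono) auto
    finally show ?thesis by (simp add: mult.assoc)
  qed
  have c3: "real N * \<alpha> \<le> (real N)^2 * \<alpha>"
    using N1 \<alpha>0 by (intro mult_right_mono) (auto simp: power2_eq_square)
  have "\<Phi>\<nu> \<pi>' - \<Phi>\<nu> \<pi> \<ge> 1 / (2 * \<eta> * (1 - \<delta>)) * S - 4 * \<eta>^2 * Ab^2 * (real N)^2 / (1 - \<delta>)^5 - (real N)^2 * \<alpha>"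
    using tot sumX c1 c2 c3 by linarith
  then show ?thesis unfolding \<Phi>\<nu>_def S_def dsq_def Ab_def N_def \<pi>_def \<pi>'_def .
qed

end

theorem mainTheorem5:
  fixes A :: "'i::finite \<Rightarrow> 'a::finite set"
    and P :: "'s::finite \<Rightarrow> ('i \<Rightarrow> 'a) \<Rightarrow> 's \<Rightarrow> real"
    and u :: "'i \<Rightarrow> 's \<Rightarrow> ('i \<Rightarrow> 'a) \<Rightarrow> real"
    and \<delta> \<alpha> \<eta> :: real
    and \<Phi> :: "'s \<Rightarrow> ('i \<Rightarrow> 's \<Rightarrow> 'a \<Rightarrow> real) \<Rightarrow> real"
    and \<nu> :: "'s \<Rightarrow> real"
    and t :: nat
  assumes A_ne: "\<And>i. A i \<noteq> {}"
    and P_nonneg: "\<And>s a s'. a \<in> joint A \<Longrightarrow> 0 \<le> P s a s'"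
    and P_sum: "\<And>s a. a \<in> joint A \<Longrightarrow> (\<Sum>s'\<in>UNIV. P s a s') = 1"
    and u_range: "\<And>i s a. a \<in> joint A \<Longrightarrow> 0 \<le> u i s a \<and> u i s a \<le> 1"
    and \<delta>_pos: "0 < \<delta>" and \<delta>_lt1: "\<delta> < 1"
    and \<eta>_pos: "0 < \<eta>"
    and pot: "is_alpha_potential A P u \<delta> \<alpha> \<Phi>"
    and \<nu>_dist: "\<nu> \<in> prob_simplex UNIV"
  shows "(\<Sum>s\<in>UNIV. \<nu> s * \<Phi> s (pga A P u \<delta> \<eta> (Suc t)))
           - (\<Sum>s\<in>UNIV. \<nu> s * \<Phi> s (pga A P u \<delta> \<eta> t))
         \<ge> 1 / (2 * \<eta> * (1 - \<delta>)) *
             (\<Sum>i\<in>UNIV. \<Sum>s\<in>UNIV.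
                visitation A P \<delta> \<nu> ((pga A P u \<delta> \<eta> t)(i := pga A P u \<delta> \<eta> (Suc t) i)) s
                * (\<Sum>a\<in>A i. (pga A P u \<delta> \<eta> (Suc t) i s a - pga A P u \<delta> \<eta> t i s a)^2))
           - 4 * \<eta>^2 * (real (Max ((\<lambda>i. card (A i)) ` UNIV)))^2 * (real CARD('i))^2 / (1 - \<delta>)^5
           - (real CARD('i))^2 * \<alpha>"
proof -
  interpret game A P \<delta> u \<eta>
    by unfold_locales (use A_ne P_nonneg P_sum u_range \<delta>_pos \<delta>_lt1 \<eta>_pos in auto)
  show ?thesis by (rule main[OF pot \<nu>_dist])
qed

end
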